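(* Let $\{\mathcal{N}(\mathbf{t}),\mathbf{t}\in\mathbb{R}^d_+\}$ be a multiparameter Poisson process with transition parameter $\boldsymbol{\Lambda}=(\lambda_1,\dots,\lambda_d)$, $\lambda_i>0$. For $\alpha_i\in(0,1)$ let $S_1^{\alpha_1},\dots,S_d^{\alpha_d}$ be independent stable subordinators, independent of $\mathcal{N}$, and set $\mathcal{N}^{\boldsymbol{\alpha}}(t)=\mathcal{N}(S_1^{\alpha_1}(t),\dots,S_d^{\alpha_d}(t))$, $t\ge0$. Then $p^{\boldsymbol{\alpha}}(n,t)=\Pr\{\mathcal{N}^{\boldsymbol{\alpha}}(t)=n\}$, $n\ge0$, is given by $$p^{\boldsymbol{\alpha}}(n,t)=\sum_{\Theta(n,d)}\prod_{i=1}^d\frac{(-1)^{n_i}}{n_i!}\sum_{r=0}^\infty\frac{(-\lambda_i^{\alpha_i}t)^r\Gamma(\alpha_ir+1)}{r!\,\Gamma(\alpha_ir+1-n_i)},$$ where $\Theta(n,d)=\{(n_1,\dots,n_d):0\le n_i\le n,\ \sum_i n_i=n\}$, and it solves $$\frac{\mathrm{d}}{\mathrm{d}t}p^{\boldsymbol{\alpha}}(n,t)=-\sum_{j=1}^d\lambda_j^{\alpha_j}\sum_{r_j=0}^n\frac{(-1)^{r_j}\Gamma(\alpha_j+1)}{r_j!\,\Gamma(\alpha_j+1-r_j)}p^{\boldsymbol{\alpha}}(n-r_j,t),\quad n\ge0,$$ with $p^{\boldsymbol{\alpha}}(0,0)=1$ and $p^{\boldsymbol{\alpha}}(n,0)=0$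 for $n\ge1$.
   Context: An $\alpha$-stable subordinator, $\alpha\in(0,1)$, is a subordinator $S^\alpha$ with $\mathbb{E}e^{-wS^\alpha(t)}=e^{-tw^\alpha}$, $w>0$. $\preceq$ is the componentwise order on $\mathbb{R}^d_+$, $\prec$ the strict relation, $\boldsymbol{\Lambda}\cdot\mathbf{t}=\sum_i\lambda_it_i$. A multiparameter Poisson process with transition parameter $\boldsymbol{\Lambda}$ is a nonnegative-integer-valued random field on $\mathbb{R}^d_+$ with $\mathcal{N}(\mathbf{0})=0$, nondecreasing in $\preceq$, with independent increments along chains $\mathbf{0}=\mathbf{t}^{(0)}\prec\dots\prec\mathbf{t}^{(m)}$, stationary increments ($\mathcal{N}(\mathbf{t})-\mathcal{N}(\mathbf{s})\overset{d}{=}\mathcal{N}(\mathbf{t}-\mathbf{s})$ for $\mathbf{s}\preceq\mathbf{t}$), and $\mathcal{N}(\mathbf{t})\sim$ Poisson$(\boldsymbol{\Lambda}\cdot\mathbf{t})$. *)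

theory Defs
  imports "HOL-Probability.Probability"
begin

text \<open>Index set of the d parameters: a finite type 'd (d = CARD('d)).
  Points of R^d_+ are functions t :: 'd \<Rightarrow> real with all components \<ge> 0;
  the componentwise order is the pointwise order on functions, and the strict
  relation is its strict part (s \<le> t and s \<noteq> t).\<close>

definition nonneg_vec :: "('d \<Rightarrow> real) \<Rightarrow> bool" where
  "nonneg_vec t \<longleftrightarrow> (\<forall>i. 0 \<le> t i)"

definition mp_poisson ::
  "'a measure \<Rightarrow> ('d::finite \<Rightarrow> real) \<Rightarrow> ('a \<Rightarrow> ('d \<Rightarrow> real) \<Rightarrow> nat) \<Rightarrow> bool" where
  "mp_poisson M Lam N \<longleftrightarrow>
     (\<lambda>(\<omega>, t). N \<omega> t) \<in> measurable (M \<Otimes>\<^sub>M (PiM UNIV (\<lambda>_. borel))) (count_space UNIV) \<and>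
     (\<forall>\<omega>\<in>space M. N \<omega> (\<lambda>_. 0) = 0) \<and>
     (\<forall>\<omega>\<in>space M. \<forall>s t. nonneg_vec s \<and> s \<le> t \<longrightarrow> N \<omega> s \<le> N \<omega> t) \<and>
     (\<forall>(m::nat) (c::nat \<Rightarrow> 'd \<Rightarrow> real). c 0 = (\<lambda>_. 0) \<and> (\<forall>k<m. c k < c (Suc k)) \<longrightarrow>
        prob_space.indep_vars M (\<lambda>_. count_space UNIV)
          (\<lambda>k \<omega>. N \<omega> (c (Suc k)) - N \<omega> (c k)) {..<m}) \<and>
     (\<forall>s t. nonneg_vec s \<and> s \<le> t \<longrightarrow>
        distr M (count_space UNIV) (\<lambda>\<omega>. N \<omega> t - N \<omega> s) =
        distr M (count_space UNIV) (\<lambda>\<omega>. N \<omega> (\<lambda>i. t i - s i))) \<and>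
     (\<forall>t k. nonneg_vec t \<longrightarrow>
        measure M {\<omega>\<in>space M. N \<omega> t = k} =
          exp (- (\<Sum>i\<in>UNIV. Lam i * t i)) * (\<Sum>i\<in>UNIV. Lam i * t i) ^ k / fact k)"

definition stable_subordinator ::
  "'a measure \<Rightarrow> real \<Rightarrow> ('a \<Rightarrow> real \<Rightarrow> real) \<Rightarrow> bool" where
  "stable_subordinator M \<alpha> S \<longleftrightarrow>
     (\<forall>t. (\<lambda>\<omega>. S \<omega> t) \<in> borel_measurable M) \<and>
     (\<forall>\<omega>\<in>space M. S \<omega> 0 = 0) \<and>
     (\<forall>\<omega>\<in>space M. \<forall>s t. 0 \<le> s \<and> s \<le> t \<longrightarrow> S \<omega> s \<le> S \<omega> t) \<and>
     (\<forall>(m::nat) (c::nat \<Rightarrow> real). c 0 = 0 \<and> (\<forall>k<m. c k < c (Suc k)) \<longrightarrow>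
        prob_space.indep_vars M (\<lambda>_. borel)
          (\<lambda>k \<omega>. S \<omega> (c (Suc k)) - S \<omega> (c k)) {..<m}) \<and>
     (\<forall>s t. 0 \<le> s \<and> s \<le> t \<longrightarrow>
        distr M borel (\<lambda>\<omega>. S \<omega> t - S \<omega> s) = distr M borel (\<lambda>\<omega>. S \<omega> (t - s))) \<and>
     (\<forall>t w. 0 \<le> t \<and> 0 < w \<longrightarrow>
        (\<integral>\<omega>. exp (- w * S \<omega> t) \<partial>M) = exp (- t * w powr \<alpha>))"

definition Theta :: "nat \<Rightarrow> ('d::finite \<Rightarrow> nat) set" where
  "Theta n = {m. (\<forall>i. m i \<le> n) \<and> (\<Sum>i\<in>UNIV. m i) = n}"

end

theory Submission
  imports Defs "HOL-Computational_Algebra.Formal_Power_Series"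
begin


lemma gch_le_binom:
  fixes a :: real
  assumes "0 \<le> a" "a \<le> real r"
  shows "\<bar>a gchoose m\<bar> \<le> real ((r+m) choose m)"
proof (induction m)
  case 0
  then show ?case by simp
next
  case (Suc m)
  have e: "(a gchoose Suc m) = (a - real m) * (a gchoose m) / real (Suc m)"
    using gbinomial_mult_1[of a m] by (simp add: field_simps)
  have n: "real (Suc (r+m)) * real ((r+m) choose m) = real ((r + Suc m) choose Suc m) * real (Suc m)"
    using Suc_times_binomial_eq[of "r+m" m] by (metis add_Suc_right of_nat_mult)
  have "\<bar>a gchoose Suc m\<bar> = \<bar>a - real m\<bar> * \<bar>a gchoose m\<bar> / real (Suc m)"
    by (simp add: e abs_mult)
  also have "\<dots> \<le> real (Suc (r+m)) * real ((r+m) choose m) / real (Suc m)"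
    apply (intro divide_right_mono mult_mono Suc)
    using assms by auto
  also have "\<dots> = real ((r + Suc m) choose Suc m)"
    using n by (simp add: field_simps)
  finally show ?case .
qed

lemma gch_bound:
  fixes a :: real
  assumes "0 \<le> a" "a \<le> real r"
  shows "\<bar>a gchoose m\<bar> \<le> 2 ^ (r+m)"
proof -
  have "real ((r+m) choose m) \<le> real (2 ^ (r+m))"
    using binomial_le_pow2[of "r+m" m] by (simp only: of_nat_le_iff)
  then show ?thesis using gch_le_binom[OF assms, of m]
    by (metis order_trans of_nat_numeral of_nat_power)
qed

definition bq :: "real \<Rightarrow> real \<Rightarrow> nat \<Rightarrow> nat \<Rightarrow> real" where
  "bq a c m r = (-c)^r / fact r * ((-1)^m * ((a * real r) gchoose m))"

definition Qs :: "real \<Rightarrow> real \<Rightarrow> nat \<Rightarrow> real \<Rightarrow> real" where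
  "Qs a c m t = (\<Sum>r. bq a c m r * t^r)"

lemma bq_bound:
  assumes "0 \<le> a" "a \<le> 1" "0 \<le> c"
  shows "\<bar>bq a c m r * t^r\<bar> \<le> 2^m * ((2*c*\<bar>t\<bar>)^r / fact r)"
proof -
  have g: "\<bar>(a * real r) gchoose m\<bar> \<le> 2^(r+m)"
    apply (rule gch_bound) using assms by (auto simp: mult_le_cancel_right1 intro: mult_left_le_one_le)
  have "\<bar>bq a c m r * t^r\<bar> = c^r / fact r * \<bar>(a * real r) gchoose m\<bar> * \<bar>t\<bar>^r"
    using assms by (simp add: bq_def abs_mult power_abs)
  also have "\<dots> \<le> c^r / fact r * 2^(r+m) * \<bar>t\<bar>^r"
    using g assms by (intro mult_right_mono mult_left_mono) auto
  also have "\<dots> = 2^m * ((2*c*\<bar>t\<bar>)^r / fact r)"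
    by (simp add: power_add power_mult_distrib field_simps)
  finally show ?thesis .
qed

lemma summable_exp_real: "summable (\<lambda>n. (x::real)^n / fact n)"
  using summable_exp[of x] by (simp add: divide_inverse mult.commute)

lemma bq_summable:
  assumes "0 \<le> a" "a \<le> 1" "0 \<le> c"
  shows "summable (\<lambda>r. bq a c m r * t^r)"
proof (rule summable_comparison_test')
  show "summable (\<lambda>r. 2^m * ((2*c*\<bar>t\<bar>)^r / fact r))"
    by (intro summable_mult summable_exp_real)
  show "norm (bq a c m r * t^r) \<le> 2^m * ((2*c*\<bar>t\<bar>)^r / fact r)" for r
    using bq_bound[OF assms] by simp
qed

lemma infsum_nat_suminf:
  fixes f :: "nat \<Rightarrow> real"
  assumes "summable (\<lambda>n. norm (f n))"
  shows "infsum f UNIV = suminf f"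
  using norm_summable_imp_has_sum[OF assms summable_sums[OF summable_norm_cancel[OF assms]]] infsumI
  by blast

lemma double_swap:
  fixes f :: "nat \<Rightarrow> nat \<Rightarrow> real"
  assumes b: "\<And>r m. \<bar>f r m\<bar> \<le> A r * B m" and A: "summable A" and B: "summable B"
    and A0: "\<And>r. 0 \<le> A r" and B0: "\<And>m. 0 \<le> B m"
  shows "(\<Sum>r. \<Sum>m. f r m) = (\<Sum>m. \<Sum>r. f r m)" and "summable (\<lambda>m. \<Sum>r. f r m)"
    and "summable (\<lambda>r. \<Sum>m. f r m)"
proof -
  have rs: "summable (\<lambda>m. norm (f r m))" for r
    by (rule summable_comparison_test'[OF summable_mult[OF B, of "A r"]]) (use b in auto)
  have cs: "summable (\<lambda>r. norm (f r m))" for m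
    by (rule summable_comparison_test'[OF summable_mult2[OF A, of "B m"]]) (use b in auto)
  have rowb: "norm (\<Sum>m. f r m) \<le> A r * suminf B" for r
  proof -
    have "norm (\<Sum>m. f r m) \<le> (\<Sum>m. norm (f r m))" by (rule summable_norm[OF rs])
    also have "\<dots> \<le> (\<Sum>m. A r * B m)"
      by (intro suminf_le rs summable_mult B) (use b in auto)
    also have "\<dots> = A r * suminf B" by (rule suminf_mult[OF B])
    finally show ?thesis .
  qed
  have colb: "norm (\<Sum>r. f r m) \<le> suminf A * B m" for m
  proof -
    have "norm (\<Sum>r. f r m) \<le> (\<Sum>r. norm (f r m))" by (rule summable_norm[OF cs])
    also have "\<dots> \<le> (\<Sum>r. A r * B m)"
      by (intro suminf_le cs summable_mult2 A) (use b in auto)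
    also have "\<dots> = suminf A * B m" by (rule suminf_mult2[OF A, symmetric])
    finally show ?thesis .
  qed
  show sr: "summable (\<lambda>r. \<Sum>m. f r m)"
    by (rule summable_comparison_test'[OF summable_mult2[OF A, of "suminf B"]]) (use rowb in auto)
  show sc: "summable (\<lambda>m. \<Sum>r. f r m)"
    by (rule summable_comparison_test'[OF summable_mult[OF B, of "suminf A"]]) (use colb in auto)
  have g: "(\<lambda>x. norm ((\<lambda>(r,m). A r * B m) x)) summable_on (Sigma UNIV (\<lambda>_. (UNIV::nat set)))"
  proof (rule Infinite_Sum.abs_summable_on_Sigma_iff[THEN iffD2], intro conjI ballI)
    fix r :: nat
    show "(\<lambda>x. norm ((\<lambda>m. case (r, m) of (r, m) \<Rightarrow> A r * B m) x)) summable_on UNIV"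
      by (rule norm_summable_imp_summable_on) (use A0 B0 summable_mult[OF B, of "A r"] in simp)
  next
    have "infsum (\<lambda>m. norm (case (r, m) of (r, m) \<Rightarrow> A r * B m)) UNIV = A r * suminf B" for r
    proof -
      have "infsum (\<lambda>m. norm (case (r, m) of (r, m) \<Rightarrow> A r * B m)) UNIV = infsum (\<lambda>m. A r * B m) UNIV"
        using A0 B0 by (intro infsum_cong) simp
      also have "\<dots> = A r * suminf B"
        by (subst infsum_nat_suminf) (use A0 B0 summable_mult[OF B, of "A r"] suminf_mult[OF B] in simp_all)
      finally show ?thesis .
    qed
    then show "(\<lambda>x. norm ((\<lambda>r. infsum (\<lambda>m. norm (case (r, m) of (r, m) \<Rightarrow> A r * B m)) UNIV) x)) summable_on UNIV"
      by (simp only:) (rule norm_summable_imp_summable_on, use A0 B0 summable_mult2[OF A, of "suminf B"] suminf_nonneg[OF B] in simp)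
  qed
  have fs: "(\<lambda>(r,m). f r m) summable_on (UNIV \<times> UNIV)"
    apply (subst summable_on_iff_abs_summable_on_real)
    apply (rule Infinite_Sum.abs_summable_on_comparison_test[OF g])
    using b A0 B0 by auto
  have "infsum (\<lambda>r. infsum (\<lambda>m. f r m) UNIV) UNIV = infsum (\<lambda>m. infsum (\<lambda>r. f r m) UNIV) UNIV"
    by (rule infsum_swap_banach[OF fs])
  moreover have "infsum (\<lambda>m. f r m) UNIV = (\<Sum>m. f r m)" for r by (rule infsum_nat_suminf[OF rs])
  moreover have "infsum (\<lambda>r. f r m) UNIV = (\<Sum>r. f r m)" for m by (rule infsum_nat_suminf[OF cs])
  ultimately have "infsum (\<lambda>r. \<Sum>m. f r m) UNIV = infsum (\<lambda>m. \<Sum>r. f r m) UNIV" by simp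
  moreover have "infsum (\<lambda>r. \<Sum>m. f r m) UNIV = (\<Sum>r. \<Sum>m. f r m)"
    by (rule infsum_nat_suminf, rule summable_comparison_test'[OF summable_mult2[OF A, of "suminf B"]]) (use rowb in auto)
  moreover have "infsum (\<lambda>m. \<Sum>r. f r m) UNIV = (\<Sum>m. \<Sum>r. f r m)"
    by (rule infsum_nat_suminf, rule summable_comparison_test'[OF summable_mult[OF B, of "suminf A"]]) (use colb in auto)
  ultimately show "(\<Sum>r. \<Sum>m. f r m) = (\<Sum>m. \<Sum>r. f r m)" by simp
qed

lemma exp_sums_real: "(\<lambda>n. (x::real)^n / fact n) sums exp x"
  using exp_converges[of x] by (simp add: divide_inverse mult.commute)

lemma Qs_sums: "0 \<le> a \<Longrightarrow> a \<le> 1 \<Longrightarrow> 0 \<le> c \<Longrightarrow> (\<lambda>r. bq a c m r * t^r) sums Qs a c m t"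
  unfolding Qs_def by (rule summable_sums[OF bq_summable])

lemma Qs_genfun:
  assumes a0: "0 \<le> a" and a1: "a \<le> 1" and c0: "0 \<le> c" and u: "\<bar>u\<bar> < 1/2"
  shows "(\<lambda>m. Qs a c m t * u^m) sums exp (-(c*t) * (1-u) powr a)"
proof -
  define f where "f r m = bq a c m r * t^r * u^m" for r m
  define A where "A r = (2*c*\<bar>t\<bar>)^r / fact r" for r :: nat
  define B where "B m = (2*\<bar>u\<bar>)^m" for m :: nat
  have b: "\<bar>f r m\<bar> \<le> A r * B m" for r m
  proof -
    have "\<bar>f r m\<bar> = \<bar>bq a c m r * t^r\<bar> * \<bar>u\<bar>^m" by (simp add: f_def abs_mult power_abs)
    also have "\<dots> \<le> 2^m * A r * \<bar>u\<bar>^m"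
      using bq_bound[OF a0 a1 c0, of m r t] by (intro mult_right_mono) (auto simp: A_def)
    also have "\<dots> = A r * B m" by (simp add: B_def power_mult_distrib)
    finally show ?thesis .
  qed
  have sA: "summable A" unfolding A_def by (rule summable_exp_real)
  have sB: "summable B" unfolding B_def using u by (intro summable_geometric) simp
  have A0: "0 \<le> A r" for r by (simp add: A_def c0)
  have B0: "0 \<le> B m" for m by (simp add: B_def)
  note sw = double_swap[of f A B, OF b sA sB A0 B0]
  have row: "(\<lambda>m. f r m) sums ((-(c*t) * (1-u) powr a)^r / fact r)" for r
  proof -
    have "(\<lambda>m. ((a * real r) gchoose m) * (-u)^m) sums (1 + -u) powr (a * real r)"
      by (rule gen_binomial_real) (use u in simp)
    then have S: "(\<lambda>m. (-c)^r / fact r * t^r * (((a * real r) gchoose m) * (-u)^m)) sums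
       ((-c)^r / fact r * t^r * (1 + -u) powr (a * real r))"
      by (rule sums_mult)
    have fe: "(\<lambda>m. f r m) = (\<lambda>m. (-c)^r / fact r * t^r * (((a * real r) gchoose m) * (-u)^m))"
      by (rule ext) (simp add: f_def bq_def power_minus[of u])
    have pe: "(1 + -u) powr (a * real r) = ((1-u) powr a)^r"
      using u by (simp add: powr_powr[symmetric] powr_realpow)
    have "(-(c*t) * (1-u) powr a)^r = ((-c) * t * (1-u) powr a)^r" by simp
    also have "\<dots> = (-c)^r * t^r * ((1-u) powr a)^r" by (simp only: power_mult_distrib)
    finally have ve: "(-c)^r / fact r * t^r * (1 + -u) powr (a * real r) = (-(c*t) * (1-u) powr a)^r / fact r"
      using pe by simp
    show ?thesis using S unfolding fe ve .
  qed
  have col: "(\<lambda>r. f r m) sums (Qs a c m t * u^m)" for m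
    unfolding f_def by (rule sums_mult2[OF Qs_sums[OF a0 a1 c0]])
  have "(\<lambda>r. \<Sum>m. f r m) = (\<lambda>r. (-(c*t) * (1-u) powr a)^r / fact r)"
    by (rule ext) (rule sums_unique[OF row, symmetric])
  then have "(\<Sum>r. \<Sum>m. f r m) = exp (-(c*t) * (1-u) powr a)"
    by (simp add: sums_unique[OF exp_sums_real, symmetric])
  moreover have "(\<lambda>m. \<Sum>r. f r m) = (\<lambda>m. Qs a c m t * u^m)"
    by (rule ext) (rule sums_unique[OF col, symmetric])
  ultimately show ?thesis using sw(1) sw(2) summable_sums by metis
qed

lemma powser_unique_pos:
  fixes a b :: "nat \<Rightarrow> real"
  assumes e: "0 < e" and sa: "\<And>u. 0 < u \<Longrightarrow> u < e \<Longrightarrow> (\<lambda>m. a m * u^m) sums F u"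
    and sb: "\<And>u. 0 < u \<Longrightarrow> u < e \<Longrightarrow> (\<lambda>m. b m * u^m) sums F u"
  shows "a m = b m"
proof -
  define d where "d m = a m - b m" for m
  have sd: "(\<lambda>m. d m * u^m) sums 0" if "0 < u" "u < e" for u
    using sums_diff[OF sa[OF that] sb[OF that]] by (simp add: d_def algebra_simps)
  have "d m = 0"
  proof (induction m rule: less_induct)
    case (less m)
    have sh: "(\<lambda>i. d (i+m) * u^i) sums 0" if u: "0 < u" "u < e" for u
    proof -
      have "(\<Sum>i<m. d i * u^i) = 0" using less by simp
      then have "(\<lambda>i. d (i+m) * u^(i+m)) sums 0"
        using sums_iff_shift[of "\<lambda>i. d i * u^i" m 0] sd[OF u] by simp
      then have "(\<lambda>i. d (i+m) * u^(i+m) * (1 / u^m)) sums (0 * (1/u^m))"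
        by (rule sums_mult2)
      then show ?thesis using u by (simp add: power_add)
    qed
    define g where "g u = (\<Sum>i. d (i+m) * u^i)" for u :: real
    have K: "summable (\<lambda>i. d (i+m) * (e/2)^i)"
      using sh[of "e/2"] e by (simp add: sums_iff)
    have cont: "isCont g 0"
      unfolding g_def by (rule isCont_powser[OF K]) (use e in simp)
    have g0: "g 0 = d m" unfolding g_def using powser_zero[of "\<lambda>i. d (i+m)"] by simp
    have ev: "eventually (\<lambda>u. g u = 0) (at_right 0)"
      unfolding eventually_at_right_field
      using e sh by (auto simp: g_def sums_iff intro!: exI[of _ e])
    have "(g \<longlongrightarrow> g 0) (at_right 0)"
      using cont by (simp add: isCont_def filterlim_at_split)
    moreover have "(g \<longlongrightarrow> 0) (at_right 0)"
      by (rule tendsto_eventually) (use ev in \<open>simp add: eventually_mono\<close>)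
    ultimately have "g 0 = 0"
      using tendsto_unique trivial_limit_at_right_real by blast
    then show ?case using g0 by simp
  qed
  then show ?thesis by (simp add: d_def)
qed

lemma diffs_bq:
  "diffs (bq a c m) r = -c * (\<Sum>k=0..m. (-1)^k * (a gchoose k) * bq a c (m-k) r)"
proof -
  have V: "(a + a * real r) gchoose m = (\<Sum>k=0..m. (a gchoose k) * ((a * real r) gchoose (m - k)))"
    by (rule gbinomial_Vandermonde[symmetric])
  have s: "(-1::real)^k * (-1)^(m-k) = (-1)^m" if "k \<in> {0..m}" for k
    using that by (simp add: power_add[symmetric])
  have f1: "real (Suc r) * ((-c)^(Suc r) / fact (Suc r)) = -c * ((-c)^r / fact r)"
    by (simp add: fact_Suc field_simps del: of_nat_Suc)
  have f2: "a * real (Suc r) = a + a * real r" by (simp add: algebra_simps)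
  have "diffs (bq a c m) r = (real (Suc r) * ((-c)^(Suc r) / fact (Suc r))) * ((-1)^m * ((a * real (Suc r)) gchoose m))"
    by (simp add: diffs_def bq_def del: of_nat_Suc)
  also have "\<dots> = -c * ((-c)^r / fact r * ((-1)^m * ((a + a * real r) gchoose m)))"
    unfolding f1 f2 by simp
  also have "\<dots> = -c * (\<Sum>k=0..m. (-c)^r / fact r * ((-1)^m * ((a gchoose k) * ((a * real r) gchoose (m - k)))))"
    by (simp add: V sum_distrib_left)
  also have "\<dots> = -c * (\<Sum>k=0..m. (-1)^k * (a gchoose k) * bq a c (m-k) r)"
    unfolding bq_def
    by (intro arg_cong[where f="\<lambda>x. -c * x"] sum.cong refl) (simp add: s[symmetric] mult_ac)
  finally show ?thesis .
qed

lemma Qs_deriv: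
  assumes a0: "0 \<le> a" and a1: "a \<le> 1" and c0: "0 \<le> c"
  shows "(Qs a c m has_real_derivative (- c * (\<Sum>k=0..m. (-1)^k * (a gchoose k) * Qs a c (m-k) t))) (at t)"
proof -
  have d: "((\<lambda>t. \<Sum>r. bq a c m r * t^r) has_field_derivative (\<Sum>r. diffs (bq a c m) r * t^r)) (at t)"
    by (rule termdiffs_strong_converges_everywhere) (rule bq_summable[OF assms])
  have "(\<Sum>r. diffs (bq a c m) r * t^r) = (\<Sum>r. -c * (\<Sum>k=0..m. (-1)^k * (a gchoose k) * (bq a c (m-k) r * t^r)))"
    by (simp add: diffs_bq sum_distrib_left sum_distrib_right mult_ac)
  also have "\<dots> = -c * (\<Sum>r. (\<Sum>k=0..m. (-1)^k * (a gchoose k) * (bq a c (m-k) r * t^r)))"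
    by (rule suminf_mult) (intro summable_sum summable_mult bq_summable assms)
  also have "(\<Sum>r. (\<Sum>k=0..m. (-1)^k * (a gchoose k) * (bq a c (m-k) r * t^r))) =
      (\<Sum>k=0..m. (\<Sum>r. (-1)^k * (a gchoose k) * (bq a c (m-k) r * t^r)))"
    by (rule suminf_sum) (intro summable_mult bq_summable assms)
  also have "\<dots> = (\<Sum>k=0..m. (-1)^k * (a gchoose k) * Qs a c (m-k) t)"
    by (intro sum.cong refl) (simp add: suminf_mult[OF bq_summable[OF assms]] Qs_def)
  finally show ?thesis using d unfolding Qs_def[abs_def] by simp
qed


lemma pow_fact_le_exp: "0 \<le> (x::real) \<Longrightarrow> x^m / fact m \<le> exp x"
  using sum_le_suminf[OF sums_summable[OF exp_sums_real[of x]], of "{m}"]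
    sums_unique[OF exp_sums_real[of x]] by auto

lemma poisson_term_bound:
  assumes "0 \<le> (x::real)"
  shows "0 \<le> exp (-x) * x^m / fact m" "exp (-x) * x^m / fact m \<le> 1"
proof -
  show "0 \<le> exp (-x) * x^m / fact m" using assms by simp
  have "exp (-x) * x^m / fact m = exp (-x) * (x^m / fact m)" by simp
  also have "\<dots> \<le> exp (-x) * exp x" using pow_fact_le_exp[OF assms] by (intro mult_left_mono) auto
  also have "\<dots> = 1" by (simp add: exp_minus field_simps)
  finally show "exp (-x) * x^m / fact m \<le> 1" .
qed

lemma laplace_coeff:
  assumes P: "prob_space M" and Ym[measurable]: "Y \<in> borel_measurable M"
    and Y0: "\<And>\<omega>. \<omega> \<in> space M \<Longrightarrow> 0 \<le> Y \<omega>"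
    and lam: "0 < lam" and a0: "0 \<le> a" and a1: "a \<le> 1"
    and L: "\<And>w. 0 < w \<Longrightarrow> (\<integral>\<omega>. exp (-w * Y \<omega>) \<partial>M) = exp (- t * w powr a)"
  shows "(\<integral>\<omega>. exp (-(lam * Y \<omega>)) * (lam * Y \<omega>)^m / fact m \<partial>M) = Qs a (lam powr a) m t"
proof -
  interpret prob_space M by (rule P)
  define q where "q m = (\<integral>\<omega>. exp (-(lam * Y \<omega>)) * (lam * Y \<omega>)^m / fact m \<partial>M)" for m
  have c0: "0 \<le> lam powr a" by simp
  have gen: "(\<lambda>m. q m * u^m) sums exp (-((lam powr a) * t) * (1-u) powr a)" if u: "0 < u" "u < 1/4" for u
  proof -
    define f where "f m \<omega> = exp (-(lam * Y \<omega>)) * (lam * Y \<omega>)^m / fact m * u^m" for m \<omega>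
    have fm[measurable]: "f m \<in> borel_measurable M" for m unfolding f_def by measurable
    have f0: "0 \<le> f m \<omega>" if "\<omega> \<in> space M" for m \<omega>
      using Y0[OF that] lam u by (simp add: f_def)
    have fsum: "(\<lambda>m. f m \<omega>) sums exp (-((lam * (1-u)) * Y \<omega>))" if "\<omega> \<in> space M" for \<omega>
    proof -
      have "(\<lambda>m. exp (-(lam * Y \<omega>)) * ((lam * Y \<omega> * u)^m / fact m)) sums (exp (-(lam * Y \<omega>)) * exp (lam * Y \<omega> * u))"
        by (rule sums_mult[OF exp_sums_real])
      moreover have "exp (-(lam * Y \<omega>)) * exp (lam * Y \<omega> * u) = exp (-((lam * (1-u)) * Y \<omega>))"
        by (simp add: exp_add[symmetric] algebra_simps)
      ultimately show ?thesis by (simp add: f_def power_mult_distrib mult_ac)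
    qed
    have fle: "f m \<omega> \<le> 1" if "\<omega> \<in> space M" for m \<omega>
    proof -
      have "f m \<omega> = (exp (-(lam * Y \<omega>)) * (lam * Y \<omega>)^m / fact m) * u^m" by (simp add: f_def)
      also have "\<dots> \<le> 1 * 1"
        using poisson_term_bound[of "lam * Y \<omega>" m] Y0[OF that] lam u
        by (intro mult_mono) (auto simp: power_le_one)
      finally show ?thesis by simp
    qed
    have fint: "integrable M (f m)" for m
      by (rule integrable_const_bound[where B=1]) (use f0 fle in \<open>auto intro!: AE_I2\<close>)
    have psum: "(\<Sum>i<n. f i \<omega>) \<le> 1" if "\<omega> \<in> space M" for n \<omega>
    proof -
      have "(\<Sum>i<n. f i \<omega>) \<le> (\<Sum>i. f i \<omega>)"
        by (rule sum_le_suminf) (use fsum[OF that] f0[OF that] in \<open>auto simp: sums_iff\<close>)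
      also have "\<dots> = exp (-((lam * (1-u)) * Y \<omega>))" using fsum[OF that] by (simp add: sums_iff)
      also have "\<dots> \<le> 1" using Y0[OF that] lam u by simp
      finally show ?thesis .
    qed
    have intnorm: "(\<integral>\<omega>. norm (f i \<omega>) \<partial>M) = integral\<^sup>L M (f i)" for i
      by (rule Bochner_Integration.integral_cong[OF refl]) (use f0 in auto)
    have sI: "summable (\<lambda>i. \<integral>\<omega>. norm (f i \<omega>) \<partial>M)"
    proof (rule summableI_nonneg_bounded[where x=1])
      show "0 \<le> (\<integral>\<omega>. norm (f i \<omega>) \<partial>M)" for i by simp
      show "(\<Sum>i<n. \<integral>\<omega>. norm (f i \<omega>) \<partial>M) \<le> 1" for n
      proof -
        have "(\<Sum>i<n. \<integral>\<omega>. norm (f i \<omega>) \<partial>M) = (\<integral>\<omega>. (\<Sum>i<n. f i \<omega>) \<partial>M)"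
          unfolding intnorm by (simp add: Bochner_Integration.integral_sum[OF fint])
        also have "\<dots> \<le> (\<integral>\<omega>. 1 \<partial>M)"
          by (rule Bochner_Integration.integral_mono) (use psum fint in auto)
        also have "\<dots> = 1" by (simp add: prob_space)
        finally show ?thesis .
      qed
    qed
    have AEs: "AE \<omega> in M. summable (\<lambda>i. norm (f i \<omega>))"
      by (rule AE_I2) (use fsum f0 in \<open>auto simp: sums_iff\<close>)
    have "(\<lambda>i. integral\<^sup>L M (f i)) sums (\<integral>\<omega>. (\<Sum>i. f i \<omega>) \<partial>M)"
      by (rule sums_integral[OF fint AEs sI])
    moreover have "(\<integral>\<omega>. (\<Sum>i. f i \<omega>) \<partial>M) = (\<integral>\<omega>. exp (-((lam * (1-u)) * Y \<omega>)) \<partial>M)"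
      by (rule Bochner_Integration.integral_cong[OF refl]) (use fsum in \<open>auto simp: sums_iff\<close>)
    moreover have "(\<integral>\<omega>. exp (-((lam * (1-u)) * Y \<omega>)) \<partial>M) = exp (-((lam powr a) * t) * (1-u) powr a)"
    proof -
      have "(\<integral>\<omega>. exp (-((lam * (1-u)) * Y \<omega>)) \<partial>M) = exp (- t * (lam * (1-u)) powr a)"
        using L[of "lam * (1-u)"] lam u by simp
      also have "(lam * (1-u)) powr a = lam powr a * (1-u) powr a"
        using lam u by (simp add: powr_mult)
      finally show ?thesis by (simp add: mult_ac)
    qed
    moreover have "integral\<^sup>L M (f i) = q i * u^i" for i
      unfolding f_def q_def by (rule integral_mult_left_zero)
    ultimately show ?thesis by simp
  qed
  have "q m = Qs a (lam powr a) m t"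
  proof (rule powser_unique_pos[where e="1/4"])
    show "(\<lambda>m. q m * u^m) sums exp (-((lam powr a) * t) * (1-u) powr a)" if "0 < u" "u < 1/4" for u
      using gen[OF that] .
    show "(\<lambda>m. Qs a (lam powr a) m t * u^m) sums exp (-((lam powr a) * t) * (1-u) powr a)" if "0 < u" "u < 1/4" for u
      by (rule Qs_genfun[OF a0 a1 c0]) (use that in simp)
  qed simp
  then show ?thesis by (simp add: q_def)
qed


definition Th :: "'d set \<Rightarrow> nat \<Rightarrow> ('d \<Rightarrow> nat) set" where
  "Th I n = {m. (\<forall>i. i \<notin> I \<longrightarrow> m i = 0) \<and> sum m I = n}"

lemma Th_finite:
  assumes "finite I"
  shows "finite (Th I n)"
proof (rule finite_subset)
  show "Th I n \<subseteq> {f. \<forall>x. (x \<in> I \<longrightarrow> f x \<in> {0..n}) \<and> (x \<notin> I \<longrightarrow> f x = 0)}"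
  proof safe
    fix m x assume m: "m \<in> Th I n" and x: "x \<in> I"
    have "m x \<le> sum m I" by (rule member_le_sum) (use x assms in auto)
    then show "m x \<in> {0..n}" using m by (auto simp: Th_def)
  qed (auto simp: Th_def)
  show "finite {f. \<forall>x. (x \<in> I \<longrightarrow> f x \<in> {0..n}) \<and> (x \<notin> I \<longrightarrow> f x = (0::nat))}"
    by (rule finite_set_of_finite_funs) (use assms in auto)
qed

lemma binom_div_fact:
  fixes x y :: real
  shows "(x + y)^n / fact n = (\<Sum>k\<le>n. (x^k / fact k) * (y^(n-k) / fact (n-k)))"
proof -
  have "(x + y)^n / fact n = (\<Sum>k\<le>n. of_nat (n choose k) * x^k * y^(n-k)) / fact n"
    by (simp add: binomial_ring)
  also have "\<dots> = (\<Sum>k\<le>n. (x^k / fact k) * (y^(n-k) / fact (n-k)))"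
    unfolding sum_divide_distrib
    by (intro sum.cong refl) (simp add: binomial_fact field_simps)
  finally show ?thesis .
qed

lemma multinomial_Th:
  fixes a :: "'d \<Rightarrow> real"
  assumes "finite I"
  shows "(sum a I)^n / fact n = (\<Sum>m\<in>Th I n. \<Prod>i\<in>I. a i ^ m i / fact (m i))"
  using assms
proof (induction I arbitrary: n rule: finite_induct)
  case empty
  have e: "Th {} n = (if n = 0 then {\<lambda>_. 0} else {})" by (auto simp: Th_def)
  show ?case unfolding e by (cases n) simp_all
next
  case (insert j I)
  have "(sum a (insert j I))^n / fact n = (a j + sum a I)^n / fact n" using insert by simp
  also have "\<dots> = (\<Sum>k\<le>n. (a j^k / fact k) * ((sum a I)^(n-k) / fact (n-k)))"
    by (rule binom_div_fact)
  also have "\<dots> = (\<Sum>k\<le>n. (a j^k / fact k) * (\<Sum>m\<in>Th I (n-k). \<Prod>i\<in>I. a i ^ m i / fact (m i)))"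
    using insert.IH by simp
  also have "\<dots> = (\<Sum>k\<le>n. \<Sum>m\<in>Th I (n-k). a j^k / fact k * (\<Prod>i\<in>I. a i ^ m i / fact (m i)))"
    by (simp add: sum_distrib_left)
  also have "\<dots> = (\<Sum>(k,m)\<in>Sigma {..n} (\<lambda>k. Th I (n-k)). a j^k / fact k * (\<Prod>i\<in>I. a i ^ m i / fact (m i)))"
    by (rule sum.Sigma) (auto intro: Th_finite insert.hyps)
  also have "\<dots> = (\<Sum>m\<in>Th (insert j I) n. \<Prod>i\<in>insert j I. a i ^ m i / fact (m i))"
  proof (rule sum.reindex_bij_witness[of _ "\<lambda>m. (m j, m(j:=0))" "\<lambda>(k,m). m(j:=k)"])
    fix km assume km: "km \<in> Sigma {..n} (\<lambda>k. Th I (n-k))"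
    obtain k m where kmd: "km = (k,m)" by force
    have mj: "m j = 0" using km insert.hyps by (auto simp: kmd Th_def)
    show "(\<lambda>m. (m j, m(j := 0))) (case km of (k, m) \<Rightarrow> m(j := k)) = km"
      using mj by (auto simp: kmd fun_upd_idem)
    have sI: "sum (m(j:=k)) I = sum m I" using insert.hyps by (intro sum.cong) auto
    show "(case km of (k, m) \<Rightarrow> m(j := k)) \<in> Th (insert j I) n"
      using km insert.hyps sI by (auto simp: kmd Th_def)
    have pI: "(\<Prod>i\<in>I. a i ^ (m(j:=k)) i / fact ((m(j:=k)) i)) = (\<Prod>i\<in>I. a i ^ m i / fact (m i))"
      using insert.hyps by (intro prod.cong) auto
    show "(\<Prod>i\<in>insert j I. a i ^ (case km of (k, m) \<Rightarrow> m(j := k)) i / fact ((case km of (k, m) \<Rightarrow> m(j := k)) i)) =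
          (case km of (k, m) \<Rightarrow> a j ^ k / fact k * (\<Prod>i\<in>I. a i ^ m i / fact (m i)))"
      using insert.hyps pI by (simp add: kmd)
  next
    fix m assume m: "m \<in> Th (insert j I) n"
    show "(case (m j, m(j := 0)) of (k, m) \<Rightarrow> m(j := k)) = m" by simp
    have sI: "sum (m(j:=0)) I = sum m I" using insert.hyps by (intro sum.cong) auto
    have "sum m (insert j I) = m j + sum m I" using insert.hyps by simp
    then show "(m j, m(j := 0)) \<in> Sigma {..n} (\<lambda>k. Th I (n - k))"
      using m sI by (auto simp: Th_def)
  qed
  finally show ?case .
qed

lemma Theta_eq: "Theta n = {m::'d::finite \<Rightarrow> nat. sum m UNIV = n}"
proof -
  have "m i \<le> sum m UNIV" for m :: "'d \<Rightarrow> nat" and i by (rule member_le_sum) auto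
  then show ?thesis by (auto simp: Theta_def)
qed

lemma Theta_Th: "Theta n = Th (UNIV::'d::finite set) n"
  by (simp add: Theta_eq Th_def)

lemma Theta_finite: "finite (Theta n :: ('d::finite \<Rightarrow> nat) set)"
  unfolding Theta_Th by (rule Th_finite) simp

lemma multinomial_Theta:
  fixes a :: "'d::finite \<Rightarrow> real"
  shows "(\<Sum>i\<in>UNIV. a i)^n / fact n = (\<Sum>m\<in>Theta n. \<Prod>i\<in>UNIV. a i ^ m i / fact (m i))"
  unfolding Theta_Th by (rule multinomial_Th) simp

lemma poisson_multinomial:
  fixes b :: "'d::finite \<Rightarrow> real"
  shows "exp (- (\<Sum>i\<in>UNIV. b i)) * (\<Sum>i\<in>UNIV. b i)^n / fact n =
    (\<Sum>m\<in>Theta n. \<Prod>i\<in>UNIV. exp (- b i) * b i ^ m i / fact (m i))"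
proof -
  have "exp (- (\<Sum>i\<in>UNIV. b i)) = (\<Prod>i\<in>UNIV. exp (- b i))"
    by (simp add: exp_sum[symmetric] sum_negf)
  then have "exp (- (\<Sum>i\<in>UNIV. b i)) * (\<Sum>i\<in>UNIV. b i)^n / fact n =
     (\<Prod>i\<in>UNIV. exp (- b i)) * ((\<Sum>i\<in>UNIV. b i)^n / fact n)" by simp
  also have "\<dots> = (\<Sum>m\<in>Theta n. (\<Prod>i\<in>UNIV. exp (- b i)) * (\<Prod>i\<in>UNIV. b i ^ m i / fact (m i)))"
    by (simp add: multinomial_Theta sum_distrib_left)
  also have "\<dots> = (\<Sum>m\<in>Theta n. \<Prod>i\<in>UNIV. exp (- b i) * b i ^ m i / fact (m i))"
    by (intro sum.cong refl) (simp add: prod.distrib[symmetric])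
  finally show ?thesis .
qed

lemma sum_upd_nat:
  fixes m :: "'d::finite \<Rightarrow> nat"
  shows "sum (m(j:=x)) UNIV + m j = sum m UNIV + x"
proof -
  have a: "sum (m(j:=x)) UNIV = x + sum (m(j:=x)) (UNIV - {j})" by (subst sum.remove[of UNIV j]) simp_all
  have b: "sum m UNIV = m j + sum m (UNIV - {j})" by (subst sum.remove[of UNIV j]) simp_all
  have c: "sum (m(j:=x)) (UNIV - {j}) = sum m (UNIV - {j})" by (intro sum.cong) auto
  show ?thesis using a b c by simp
qed

lemma prod_upd:
  fixes Q :: "'d::finite \<Rightarrow> nat \<Rightarrow> real"
  shows "(\<Prod>i\<in>UNIV. Q i ((m(j:=x)) i)) = Q j x * (\<Prod>i\<in>UNIV-{j}. Q i (m i))"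
proof -
  have "(\<Prod>i\<in>UNIV. Q i ((m(j:=x)) i)) = Q j x * (\<Prod>i\<in>UNIV-{j}. Q i ((m(j:=x)) i))"
    by (subst prod.remove[of UNIV j]) simp_all
  also have "(\<Prod>i\<in>UNIV-{j}. Q i ((m(j:=x)) i)) = (\<Prod>i\<in>UNIV-{j}. Q i (m i))"
    by (intro prod.cong) auto
  finally show ?thesis .
qed

lemma deriv_comb_j:
  fixes Q :: "'d::finite \<Rightarrow> nat \<Rightarrow> real" and \<beta> :: "nat \<Rightarrow> real"
  shows "(\<Sum>m\<in>Theta n. (\<Sum>k=0..m j. \<beta> k * Q j (m j - k)) * (\<Prod>i\<in>UNIV-{j}. Q i (m i)))
       = (\<Sum>r=0..n. \<beta> r * (\<Sum>m\<in>Theta (n-r). \<Prod>i\<in>UNIV. Q i (m i)))"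
proof -
  have "(\<Sum>m\<in>Theta n. (\<Sum>k=0..m j. \<beta> k * Q j (m j - k)) * (\<Prod>i\<in>UNIV-{j}. Q i (m i)))
      = (\<Sum>m\<in>Theta n. \<Sum>k=0..m j. \<beta> k * (\<Prod>i\<in>UNIV. Q i ((m(j := m j - k)) i)))"
    unfolding prod_upd by (intro sum.cong refl) (simp add: sum_distrib_right mult.assoc)
  also have "\<dots> = (\<Sum>(m,k)\<in>Sigma (Theta n) (\<lambda>m. {0..m j}). \<beta> k * (\<Prod>i\<in>UNIV. Q i ((m(j := m j - k)) i)))"
    by (rule sum.Sigma) (auto intro: Theta_finite)
  also have "\<dots> = (\<Sum>(r,m)\<in>Sigma {0..n} (\<lambda>r. Theta (n-r)). \<beta> r * (\<Prod>i\<in>UNIV. Q i (m i)))"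
  proof (rule sum.reindex_bij_witness[of _ "\<lambda>(r,m). (m(j := m j + r), r)" "\<lambda>(m,k). (k, m(j := m j - k))"])
    fix a :: "('d \<Rightarrow> nat) \<times> nat" assume a: "a \<in> Sigma (Theta n) (\<lambda>m. {0..m j})"
    obtain m k where ad: "a = (m,k)" by force
    have mT: "sum m UNIV = n" and k: "k \<le> m j" using a by (auto simp: ad Theta_eq)
    have "m j \<le> sum m UNIV" by (rule member_le_sum) auto
    then have kn: "k \<le> n" using mT k by simp
    show "(\<lambda>(r, m). (m(j := m j + r), r)) ((\<lambda>(m, k). (k, m(j := m j - k))) a) = a"
      using k by (auto simp: ad)
    have "sum (m(j := m j - k)) UNIV + m j = sum m UNIV + (m j - k)" by (rule sum_upd_nat)
    then have "sum (m(j := m j - k)) UNIV = n - k" using mT k by simp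
    then show "(\<lambda>(m, k). (k, m(j := m j - k))) a \<in> Sigma {0..n} (\<lambda>r. Theta (n - r))"
      using kn by (auto simp: ad Theta_eq)
    show "(\<lambda>(r, m). \<beta> r * (\<Prod>i\<in>UNIV. Q i (m i))) ((\<lambda>(m, k). (k, m(j := m j - k))) a) =
          (\<lambda>(m, k). \<beta> k * (\<Prod>i\<in>UNIV. Q i ((m(j := m j - k)) i))) a"
      by (simp add: ad)
  next
    fix b :: "nat \<times> ('d \<Rightarrow> nat)" assume b: "b \<in> Sigma {0..n} (\<lambda>r. Theta (n-r))"
    obtain r m where bd: "b = (r,m)" by force
    have mT: "sum m UNIV = n - r" and rn: "r \<le> n" using b by (auto simp: bd Theta_eq)
    show "(\<lambda>(m, k). (k, m(j := m j - k))) ((\<lambda>(r, m). (m(j := m j + r), r)) b) = b"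
      by (auto simp: bd)
    have "sum (m(j := m j + r)) UNIV + m j = sum m UNIV + (m j + r)" by (rule sum_upd_nat)
    then have "sum (m(j := m j + r)) UNIV = n" using mT rn by simp
    then show "(\<lambda>(r, m). (m(j := m j + r), r)) b \<in> Sigma (Theta n) (\<lambda>m. {0..m j})"
      by (auto simp: bd Theta_eq)
  qed
  also have "\<dots> = (\<Sum>r=0..n. \<Sum>m\<in>Theta (n-r). \<beta> r * (\<Prod>i\<in>UNIV. Q i (m i)))"
    by (rule sum.Sigma[symmetric]) (auto intro: Theta_finite)
  also have "\<dots> = (\<Sum>r=0..n. \<beta> r * (\<Sum>m\<in>Theta (n-r). \<Prod>i\<in>UNIV. Q i (m i)))"
    by (simp add: sum_distrib_left)
  finally show ?thesis .
qed


definition Dk :: "('d \<Rightarrow> 'a \<Rightarrow> real \<Rightarrow> real) \<Rightarrow> real \<Rightarrow> nat \<Rightarrow> 'a \<Rightarrow> ('d \<Rightarrow> int)" where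
  "Dk S t K \<omega> = (\<lambda>i. \<lfloor>S i \<omega> t * real (Suc K)\<rfloor>)"
definition yD :: "nat \<Rightarrow> ('d \<Rightarrow> int) \<Rightarrow> ('d \<Rightarrow> real)" where
  "yD K D = (\<lambda>i. real_of_int (D i) / real (Suc K))"
definition yU :: "nat \<Rightarrow> ('d \<Rightarrow> int) \<Rightarrow> ('d \<Rightarrow> real)" where
  "yU K D = (\<lambda>i. (real_of_int (D i) + 1) / real (Suc K))"
definition pois :: "('d::finite \<Rightarrow> real) \<Rightarrow> nat \<Rightarrow> ('d \<Rightarrow> real) \<Rightarrow> real" where
  "pois Lam n x = exp (- (\<Sum>i\<in>UNIV. Lam i * x i)) * (\<Sum>i\<in>UNIV. Lam i * x i)^n / fact n"

context
  fixes M :: "'a measure" and Lam :: "'d::finite \<Rightarrow> real" and N :: "'a \<Rightarrow> ('d \<Rightarrow> real) \<Rightarrow> nat"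
    and S :: "'d \<Rightarrow> 'a \<Rightarrow> real \<Rightarrow> real" and t :: real
  assumes P: "prob_space M" and LamP: "\<And>i. 0 < Lam i" and NP: "mp_poisson M Lam N"
    and Sm: "\<And>i. (\<lambda>\<omega>. S i \<omega> t) \<in> borel_measurable M"
    and S0: "\<And>i \<omega>. \<omega> \<in> space M \<Longrightarrow> 0 \<le> S i \<omega> t"
    and Ind: "prob_space.indep_sets M
           (\<lambda>k. case k of
                None \<Rightarrow> sets (vimage_algebra (space M) N (PiM UNIV (\<lambda>_. count_space UNIV)))
              | Some i \<Rightarrow> sets (vimage_algebra (space M) (S i) (PiM UNIV (\<lambda>_. borel))))
           UNIV"
begin

lemma NjM: "(\<lambda>(\<omega>, t). N \<omega> t) \<in> measurable (M \<Otimes>\<^sub>M (PiM UNIV (\<lambda>_. borel))) (count_space UNIV)"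
  using NP by (simp add: mp_poisson_def)

lemma N_comp_meas:
  assumes Y: "Y \<in> measurable M (PiM UNIV (\<lambda>_. borel))"
  shows "(\<lambda>\<omega>. N \<omega> (Y \<omega>)) \<in> measurable M (count_space UNIV)"
proof -
  have "(\<lambda>\<omega>. (\<omega>, Y \<omega>)) \<in> measurable M (M \<Otimes>\<^sub>M (PiM UNIV (\<lambda>_. borel)))"
    by (rule measurable_Pair[OF measurable_ident_sets[OF refl] Y])
  from measurable_compose[OF this NjM] show ?thesis by simp
qed

lemma N_const_meas: "(\<lambda>\<omega>. N \<omega> y) \<in> measurable M (count_space UNIV)"
  by (rule N_comp_meas) (simp add: space_PiM)

lemma Y_meas: "(\<lambda>\<omega>. (\<lambda>i. S i \<omega> t)) \<in> measurable M (PiM UNIV (\<lambda>_. borel))"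
  by (rule measurable_PiM_single') (auto intro: Sm simp: space_PiM)

lemma N_set_meas: "{\<omega> \<in> space M. Q (N \<omega> y)} \<in> sets M"
proof -
  have "{\<omega> \<in> space M. Q (N \<omega> y)} = (\<lambda>\<omega>. N \<omega> y) -` {k. Q k} \<inter> space M" by auto
  then show ?thesis using measurable_sets[OF N_const_meas, of "{k. Q k}" y] by simp
qed

lemma N_set_meas2: "{\<omega> \<in> space M. Q (N \<omega> y) (N \<omega> y')} \<in> sets M"
proof -
  have m: "(\<lambda>\<omega>. (N \<omega> y, N \<omega> y')) \<in> measurable M (count_space UNIV \<Otimes>\<^sub>M count_space UNIV)"
    by (rule measurable_Pair[OF N_const_meas N_const_meas])
  have "{\<omega> \<in> space M. Q (N \<omega> y) (N \<omega> y')} = (\<lambda>\<omega>. (N \<omega> y, N \<omega> y')) -` {(a,b). Q a b} \<inter> space M" by auto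
  moreover have "{(a,b). Q a b} \<in> sets (count_space UNIV \<Otimes>\<^sub>M count_space (UNIV::nat set))"
    by (subst pair_measure_countable) auto
  ultimately show ?thesis using measurable_sets[OF m, of "{(a,b). Q a b}"] by (simp add: vimage_def)
qed

lemma indep_NS:
  assumes G: "G \<in> sets (vimage_algebra (space M) N (PiM UNIV (\<lambda>_. count_space UNIV)))"
    and C: "\<And>i. C i \<in> sets (vimage_algebra (space M) (S i) (PiM UNIV (\<lambda>_. borel)))"
  shows "measure M (G \<inter> (\<Inter>i. C i)) = measure M G * measure M (\<Inter>i. C i)"
proof -
  interpret prob_space M by (rule P)
  define A where "A k = (case k of None \<Rightarrow> G | Some i \<Rightarrow> C i)" for k
  have AF: "\<forall>j\<in>UNIV. A j \<in> (case j of
                None \<Rightarrow> sets (vimage_algebra (space M) N (PiM UNIV (\<lambda>_. count_space UNIV)))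
              | Some i \<Rightarrow> sets (vimage_algebra (space M) (S i) (PiM UNIV (\<lambda>_. borel))))"
    using G C by (auto simp: A_def split: option.split)
  have "prob (\<Inter>j\<in>UNIV. A j) = (\<Prod>j\<in>UNIV. prob (A j))"
    by (rule indep_setsD[OF Ind]) (use AF in auto)
  moreover have "prob (\<Inter>j\<in>Some ` UNIV. A j) = (\<Prod>j\<in>Some ` UNIV. prob (A j))"
    by (rule indep_setsD[OF Ind]) (use AF in auto)
  moreover have "(\<Inter>j\<in>UNIV. A j) = G \<inter> (\<Inter>i. C i)"
    by (auto simp: A_def UNIV_option_conv)
  moreover have "(\<Inter>j\<in>Some ` UNIV. A j) = (\<Inter>i. C i)"
    by (auto simp: A_def)
  moreover have "(\<Prod>j\<in>UNIV. prob (A j)) = prob G * (\<Prod>j\<in>Some ` UNIV. prob (A j))"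
    by (simp add: UNIV_option_conv prod.insert A_def)
  ultimately show ?thesis by simp
qed

lemma G_in: "{\<omega> \<in> space M. Q (N \<omega> y) (N \<omega> y')} \<in> sets (vimage_algebra (space M) N (PiM UNIV (\<lambda>_. count_space UNIV)))"
proof -
  have m: "(\<lambda>f. (f y, f y')) \<in> measurable (PiM UNIV (\<lambda>_. count_space UNIV)) (count_space UNIV \<Otimes>\<^sub>M count_space (UNIV::nat set))"
    by measurable
  have "{(a,b). Q a b} \<in> sets (count_space UNIV \<Otimes>\<^sub>M count_space (UNIV::nat set))"
    by (subst pair_measure_countable) auto
  from measurable_sets[OF m this]
  have "{f. Q (f y) (f y')} \<in> sets (PiM UNIV (\<lambda>_. count_space UNIV))"
    by (simp add: space_PiM vimage_def)
  from in_vimage_algebra[OF this, of N "space M"] show ?thesis by (simp add: vimage_def Int_def conj_commute)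
qed

lemma C_in: "{\<omega> \<in> space M. \<lfloor>S i \<omega> t * s\<rfloor> = d} \<in> sets (vimage_algebra (space M) (S i) (PiM UNIV (\<lambda>_. borel)))"
proof -
  have "{g::real\<Rightarrow>real. of_int d \<le> g t * s \<and> g t * s < of_int d + 1} \<in> sets (PiM UNIV (\<lambda>_. borel))"
  proof -
    have "{g \<in> space (PiM UNIV (\<lambda>_. borel)). of_int d \<le> g t * s \<and> g t * s < of_int d + 1} \<in> sets (PiM UNIV (\<lambda>_. (borel::real measure)))"
      by measurable
    then show ?thesis by (simp add: space_PiM)
  qed
  from in_vimage_algebra[OF this, of "S i" "space M"]
  show ?thesis by (simp add: floor_eq_iff vimage_def Int_def conj_commute)
qed

lemma pois_bound:
  assumes "\<And>i. 0 \<le> x i"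
  shows "0 \<le> pois Lam n x" "pois Lam n x \<le> 1"
proof -
  have "0 \<le> (\<Sum>i\<in>UNIV. Lam i * x i)" using assms LamP by (intro sum_nonneg) (simp add: less_imp_le)
  then show "0 \<le> pois Lam n x" "pois Lam n x \<le> 1"
    using poisson_term_bound[of "\<Sum>i\<in>UNIV. Lam i * x i" n] by (simp_all add: pois_def)
qed

lemma pois_law:
  assumes "\<And>i. 0 \<le> y i"
  shows "measure M {\<omega> \<in> space M. N \<omega> y = k} = pois Lam k y"
  using NP assms by (simp add: mp_poisson_def nonneg_vec_def pois_def)

lemma N_mono:
  assumes "\<omega> \<in> space M" "\<And>i. 0 \<le> y i" "\<And>i. y i \<le> y' i"
  shows "N \<omega> y \<le> N \<omega> y'"
  using NP assms by (auto simp: mp_poisson_def nonneg_vec_def le_fun_def)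

lemma Bk_eq: "{\<omega> \<in> space M. Dk S t K \<omega> = D} = (\<Inter>i. {\<omega> \<in> space M. \<lfloor>S i \<omega> t * real (Suc K)\<rfloor> = D i})"
  by (auto simp: Dk_def fun_eq_iff)

lemma Bk_sets: "{\<omega> \<in> space M. Dk S t K \<omega> = D} \<in> sets M"
proof -
  have "{\<omega> \<in> space M. \<lfloor>S i \<omega> t * real (Suc K)\<rfloor> = D i} \<in> sets M" for i
    using Sm[of i] by measurable
  then show ?thesis unfolding Bk_eq by (intro sets.finite_INT) auto
qed

lemma Dk_bounds:
  assumes "\<omega> \<in> space M"
  shows "yD K (Dk S t K \<omega>) i \<le> S i \<omega> t" "S i \<omega> t \<le> yU K (Dk S t K \<omega>) i"
    "0 \<le> yD K (Dk S t K \<omega>) i" "0 \<le> Dk S t K \<omega> i"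
    "S i \<omega> t - 1 / real (Suc K) \<le> yD K (Dk S t K \<omega>) i"
proof -
  define x where "x = S i \<omega> t"
  define s where "s = real (Suc K)"
  have x0: "0 \<le> x" using S0[OF assms] by (simp add: x_def)
  have s0: "0 < s" by (simp add: s_def)
  have f1: "real_of_int \<lfloor>x * s\<rfloor> \<le> x * s" by simp
  have f2: "x * s < real_of_int \<lfloor>x * s\<rfloor> + 1" by simp
  have f0: "0 \<le> \<lfloor>x * s\<rfloor>" using x0 s0 by simp
  show "yD K (Dk S t K \<omega>) i \<le> S i \<omega> t"
    using f1 s0 by (simp add: yD_def Dk_def x_def[symmetric] s_def[symmetric] divide_le_eq)
  show "S i \<omega> t \<le> yU K (Dk S t K \<omega>) i"
    using f2 s0 by (simp add: yU_def Dk_def x_def[symmetric] s_def[symmetric] le_divide_eq)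
  show "0 \<le> yD K (Dk S t K \<omega>) i"
    using f0 s0 unfolding yD_def Dk_def x_def[symmetric] s_def[symmetric] by simp
  show "0 \<le> Dk S t K \<omega> i"
    using x0 unfolding Dk_def x_def by simp
  have "x * s - 1 \<le> real_of_int \<lfloor>x * s\<rfloor>" using f2 by simp
  then have "(x * s - 1) / s \<le> real_of_int \<lfloor>x * s\<rfloor> / s" using s0 by (simp add: divide_right_mono)
  then show "S i \<omega> t - 1 / real (Suc K) \<le> yD K (Dk S t K \<omega>) i"
    using s0 unfolding yD_def Dk_def x_def[symmetric] s_def[symmetric] by (simp add: diff_divide_distrib)
qed

lemma partition_emeasure:
  assumes E: "E \<in> sets M"
  shows "emeasure M E = (\<integral>\<^sup>+D. emeasure M (E \<inter> {\<omega> \<in> space M. Dk S t K \<omega> = D}) \<partial>count_space UNIV)"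
proof -
  have "emeasure M (\<Union>D. E \<inter> {\<omega> \<in> space M. Dk S t K \<omega> = D}) =
      (\<integral>\<^sup>+D. emeasure M (E \<inter> {\<omega> \<in> space M. Dk S t K \<omega> = D}) \<partial>count_space UNIV)"
    by (rule emeasure_UN_countable) (auto intro: Bk_sets E simp: disjoint_family_on_def)
  moreover have "(\<Union>D. E \<inter> {\<omega> \<in> space M. Dk S t K \<omega> = D}) = E"
    using sets.sets_into_space[OF E] by auto
  ultimately show ?thesis by simp
qed

lemma lowp_meas: "(\<lambda>\<omega>. yD K (Dk S t K \<omega>)) \<in> measurable M (PiM UNIV (\<lambda>_. borel))"
proof (rule measurable_PiM_single')
  fix i :: 'd
  show "(\<lambda>\<omega>. yD K (Dk S t K \<omega>) i) \<in> borel_measurable M"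
    unfolding yD_def Dk_def using Sm[of i] by measurable
qed (auto simp: space_PiM)

lemma uppp_meas: "(\<lambda>\<omega>. yU K (Dk S t K \<omega>)) \<in> measurable M (PiM UNIV (\<lambda>_. borel))"
proof (rule measurable_PiM_single')
  fix i :: 'd
  show "(\<lambda>\<omega>. yU K (Dk S t K \<omega>) i) \<in> borel_measurable M"
    unfolding yU_def Dk_def using Sm[of i] by measurable
qed (auto simp: space_PiM)

lemma NN_set_meas:
  assumes Y1: "Y1 \<in> measurable M (PiM UNIV (\<lambda>_. borel))" and Y2: "Y2 \<in> measurable M (PiM UNIV (\<lambda>_. borel))"
  shows "{\<omega> \<in> space M. Q (N \<omega> (Y1 \<omega>)) (N \<omega> (Y2 \<omega>))} \<in> sets M"
proof -
  have m: "(\<lambda>\<omega>. (N \<omega> (Y1 \<omega>), N \<omega> (Y2 \<omega>))) \<in> measurable M (count_space UNIV \<Otimes>\<^sub>M count_space UNIV)"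
    by (rule measurable_Pair[OF N_comp_meas[OF Y1] N_comp_meas[OF Y2]])
  have "{(a,b). Q a b} \<in> sets (count_space UNIV \<Otimes>\<^sub>M count_space (UNIV::nat set))"
    by (subst pair_measure_countable) auto
  from measurable_sets[OF m this] show ?thesis by (simp add: vimage_def Int_def conj_commute)
qed

lemma incr_bound:
  assumes D0: "\<And>i. 0 \<le> D i"
  shows "measure M {\<omega> \<in> space M. N \<omega> (yD K D) \<noteq> N \<omega> (yU K D)} \<le> (\<Sum>i\<in>UNIV. Lam i) / real (Suc K)"
proof -
  interpret prob_space M by (rule P)
  define y where "y = yD K D"
  define y' where "y' = yU K D"
  define h where "h = 1 / real (Suc K)"
  have y0: "0 \<le> y i" for i using D0[of i] by (simp add: y_def yD_def)
  have yy: "y i \<le> y' i" for i by (simp add: y_def y'_def yD_def yU_def divide_right_mono)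
  have diff: "(\<lambda>i. y' i - y i) = (\<lambda>i. h)"
    by (simp add: y_def y'_def yD_def yU_def h_def fun_eq_iff diff_divide_distrib[symmetric])
  have dm: "(\<lambda>\<omega>. N \<omega> y' - N \<omega> y) \<in> measurable M (count_space UNIV)"
  proof -
    have "(\<lambda>\<omega>. (N \<omega> y', N \<omega> y)) \<in> measurable M (count_space UNIV \<Otimes>\<^sub>M count_space UNIV)"
      by (rule measurable_Pair[OF N_const_meas N_const_meas])
    moreover have "(\<lambda>(a,b). a - b) \<in> measurable (count_space UNIV \<Otimes>\<^sub>M count_space (UNIV::nat set)) (count_space (UNIV::nat set))"
      by (subst pair_measure_countable) auto
    ultimately show ?thesis using measurable_compose by fastforce
  qed
  have st: "distr M (count_space UNIV) (\<lambda>\<omega>. N \<omega> y' - N \<omega> y) = distr M (count_space UNIV) (\<lambda>\<omega>. N \<omega> (\<lambda>i. y' i - y i))"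
  proof -
    have "\<forall>s t. nonneg_vec s \<and> s \<le> t \<longrightarrow>
        distr M (count_space UNIV) (\<lambda>\<omega>. N \<omega> t - N \<omega> s) =
        distr M (count_space UNIV) (\<lambda>\<omega>. N \<omega> (\<lambda>i. t i - s i))"
      using NP by (simp add: mp_poisson_def)
    moreover have "nonneg_vec y \<and> y \<le> y'" using y0 yy by (simp add: nonneg_vec_def le_fun_def)
    ultimately show ?thesis by blast
  qed
  have "{\<omega> \<in> space M. N \<omega> y \<noteq> N \<omega> y'} = (\<lambda>\<omega>. N \<omega> y' - N \<omega> y) -` {k. k \<noteq> 0} \<inter> space M"
  proof -
    have mono: "N \<omega> y \<le> N \<omega> y'" if "\<omega> \<in> space M" for \<omega>
      by (rule N_mono) (auto intro: y0 yy that)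
    then show ?thesis by force
  qed
  then have "prob {\<omega> \<in> space M. N \<omega> y \<noteq> N \<omega> y'} = measure (distr M (count_space UNIV) (\<lambda>\<omega>. N \<omega> y' - N \<omega> y)) {k. k \<noteq> 0}"
    by (simp add: measure_distr[OF dm])
  also have "\<dots> = measure (distr M (count_space UNIV) (\<lambda>\<omega>. N \<omega> (\<lambda>i. h))) {k. k \<noteq> 0}"
    using st diff by simp
  also have "\<dots> = prob (space M - {\<omega> \<in> space M. N \<omega> (\<lambda>i. h) = 0})"
    by (subst measure_distr[OF N_const_meas]) (auto intro!: arg_cong[where f=prob])
  also have "\<dots> = 1 - prob {\<omega> \<in> space M. N \<omega> (\<lambda>i. h) = 0}"
    by (rule prob_compl[OF N_set_meas])
  also have "\<dots> = 1 - exp (- (\<Sum>i\<in>UNIV. Lam i * h))"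
    by (subst pois_law) (simp_all add: h_def pois_def)
  also have "\<dots> \<le> (\<Sum>i\<in>UNIV. Lam i * h)"
    using exp_ge_add_one_self[of "- (\<Sum>i\<in>UNIV. Lam i * h)"] by linarith
  also have "\<dots> = (\<Sum>i\<in>UNIV. Lam i) / real (Suc K)"
    by (simp add: h_def sum_divide_distrib)
  finally show ?thesis by (simp add: y_def y'_def)
qed

lemma Ek_bound:
  "measure M {\<omega> \<in> space M. N \<omega> (yD K (Dk S t K \<omega>)) \<noteq> N \<omega> (yU K (Dk S t K \<omega>))} \<le> (\<Sum>i\<in>UNIV. Lam i) / real (Suc K)"
  (is "measure M ?E \<le> ?c")
proof -
  interpret prob_space M by (rule P)
  define B where "B D = {\<omega> \<in> space M. Dk S t K \<omega> = D}" for D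
  define G where "G D = {\<omega> \<in> space M. N \<omega> (yD K D) \<noteq> N \<omega> (yU K D)}" for D
  have Esets: "?E \<in> sets M" by (rule NN_set_meas[OF lowp_meas uppp_meas])
  have c0: "0 \<le> ?c" using LamP by (intro divide_nonneg_nonneg sum_nonneg) (auto simp: less_imp_le)
  have le: "emeasure M (?E \<inter> B D) \<le> ennreal ?c * emeasure M (B D)" for D
  proof (cases "B D = {}")
    case True then show ?thesis by simp
  next
    case False
    then obtain \<omega> where \<omega>: "\<omega> \<in> B D" by blast
    then have D0: "0 \<le> D i" for i using Dk_bounds(4)[of \<omega> K i] by (auto simp: B_def)
    have EB: "?E \<inter> B D = G D \<inter> (\<Inter>i. {\<omega> \<in> space M. \<lfloor>S i \<omega> t * real (Suc K)\<rfloor> = D i})"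
      unfolding B_def G_def Bk_eq[symmetric] by auto
    have BB: "B D = (\<Inter>i. {\<omega> \<in> space M. \<lfloor>S i \<omega> t * real (Suc K)\<rfloor> = D i})"
      unfolding B_def Bk_eq ..
    have "measure M (?E \<inter> B D) = measure M (G D \<inter> (\<Inter>i. {\<omega> \<in> space M. \<lfloor>S i \<omega> t * real (Suc K)\<rfloor> = D i}))"
      using EB by simp
    also have "\<dots> = measure M (G D) * measure M (B D)"
      unfolding BB G_def by (rule indep_NS[OF G_in C_in])
    finally have "measure M (?E \<inter> B D) = measure M (G D) * measure M (B D)" .
    also have "\<dots> \<le> ?c * measure M (B D)"
      using incr_bound[OF D0] by (intro mult_right_mono) (auto simp: G_def)
    finally have "measure M (?E \<inter> B D) \<le> ?c * measure M (B D)" .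
    then have "ennreal (measure M (?E \<inter> B D)) \<le> ennreal (?c * measure M (B D))"
      by (rule ennreal_leI)
    also have "\<dots> = ennreal ?c * ennreal (measure M (B D))"
      by (rule ennreal_mult[OF c0 measure_nonneg])
    finally show ?thesis by (simp add: emeasure_eq_measure)
  qed
  have "emeasure M ?E = (\<integral>\<^sup>+D. emeasure M (?E \<inter> B D) \<partial>count_space UNIV)"
    unfolding B_def by (rule partition_emeasure[OF Esets])
  also have "\<dots> \<le> (\<integral>\<^sup>+D. ennreal ?c * emeasure M (B D) \<partial>count_space UNIV)"
    by (rule nn_integral_mono) (rule le)
  also have "\<dots> = ennreal ?c * (\<integral>\<^sup>+D. emeasure M (B D) \<partial>count_space UNIV)"
    by (rule nn_integral_cmult) simp
  also have "(\<integral>\<^sup>+D. emeasure M (B D) \<partial>count_space UNIV) = emeasure M (space M)"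
    using partition_emeasure[OF sets.top] by (simp add: B_def Int_absorb1)
  finally have "ennreal (measure M ?E) \<le> ennreal ?c" by (simp add: emeasure_eq_measure prob_space)
  then show ?thesis using c0 by simp
qed

lemma pois_lowp_meas: "(\<lambda>\<omega>. pois Lam n (yD K (Dk S t K \<omega>))) \<in> borel_measurable M"
  unfolding pois_def yD_def Dk_def using Sm by measurable

lemma Ak_eq:
  "measure M {\<omega> \<in> space M. N \<omega> (yD K (Dk S t K \<omega>)) = n} = (\<integral>\<omega>. pois Lam n (yD K (Dk S t K \<omega>)) \<partial>M)"
  (is "measure M ?A = _")
proof -
  interpret prob_space M by (rule P)
  define B where "B D = {\<omega> \<in> space M. Dk S t K \<omega> = D}" for D
  define G where "G D = {\<omega> \<in> space M. N \<omega> (yD K D) = n}" for D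
  have Asets: "?A \<in> sets M" using NN_set_meas[OF lowp_meas lowp_meas, of "\<lambda>a b. a = n"] by simp
  have Bs: "B D \<in> sets M" for D unfolding B_def by (rule Bk_sets)
  have eq: "emeasure M (?A \<inter> B D) = ennreal (pois Lam n (yD K D)) * emeasure M (B D)" for D
  proof (cases "B D = {}")
    case True then show ?thesis by simp
  next
    case False
    then obtain \<omega> where \<omega>: "\<omega> \<in> B D" by blast
    then have D0: "0 \<le> D i" for i using Dk_bounds(4)[of \<omega> K i] by (auto simp: B_def)
    have y0: "0 \<le> yD K D i" for i using D0[of i] by (simp add: yD_def)
    have EB: "?A \<inter> B D = G D \<inter> (\<Inter>i. {\<omega> \<in> space M. \<lfloor>S i \<omega> t * real (Suc K)\<rfloor> = D i})"
      unfolding B_def G_def Bk_eq[symmetric] by auto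
    have BB: "B D = (\<Inter>i. {\<omega> \<in> space M. \<lfloor>S i \<omega> t * real (Suc K)\<rfloor> = D i})"
      unfolding B_def Bk_eq ..
    have "measure M (?A \<inter> B D) = measure M (G D \<inter> (\<Inter>i. {\<omega> \<in> space M. \<lfloor>S i \<omega> t * real (Suc K)\<rfloor> = D i}))"
      using EB by simp
    also have "\<dots> = measure M (G D) * measure M (B D)"
      unfolding BB G_def by (rule indep_NS[OF G_in[of "\<lambda>a b. a = n"] C_in, simplified])
    also have "\<dots> = pois Lam n (yD K D) * measure M (B D)"
      unfolding G_def by (subst pois_law[OF y0]) simp
    finally show ?thesis
      using pois_bound(1)[OF y0] by (simp add: emeasure_eq_measure ennreal_mult)
  qed
  have "(\<integral>\<^sup>+\<omega>. ennreal (pois Lam n (yD K (Dk S t K \<omega>))) \<partial>M) =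
      (\<integral>\<^sup>+\<omega>. (\<integral>\<^sup>+D. ennreal (pois Lam n (yD K D)) * indicator (B D) \<omega> \<partial>count_space UNIV) \<partial>M)"
  proof (rule nn_integral_cong)
    fix \<omega> assume \<omega>: "\<omega> \<in> space M"
    have "(\<integral>\<^sup>+D. ennreal (pois Lam n (yD K D)) * indicator (B D) \<omega> \<partial>count_space UNIV) =
        (\<integral>\<^sup>+D. ennreal (pois Lam n (yD K D)) * indicator {Dk S t K \<omega>} D \<partial>count_space UNIV)"
      using \<omega> by (intro nn_integral_cong) (auto simp: B_def split: split_indicator)
    also have "\<dots> = ennreal (pois Lam n (yD K (Dk S t K \<omega>)))"
      by simp
    finally show "ennreal (pois Lam n (yD K (Dk S t K \<omega>))) =
        (\<integral>\<^sup>+D. ennreal (pois Lam n (yD K D)) * indicator (B D) \<omega> \<partial>count_space UNIV)" by simp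
  qed
  also have "\<dots> = (\<integral>\<^sup>+D. (\<integral>\<^sup>+\<omega>. ennreal (pois Lam n (yD K D)) * indicator (B D) \<omega> \<partial>M) \<partial>count_space UNIV)"
  proof (rule nn_integral_count_space_nn_integral)
    show "(\<lambda>\<omega>. ennreal (pois Lam n (yD K D)) * indicator (B D) \<omega>) \<in> borel_measurable M" for D
      by (intro borel_measurable_times_ennreal borel_measurable_const borel_measurable_indicator Bs)
  qed simp
  also have "\<dots> = (\<integral>\<^sup>+D. ennreal (pois Lam n (yD K D)) * emeasure M (B D) \<partial>count_space UNIV)"
    by (intro nn_integral_cong nn_integral_cmult_indicator Bs)
  also have "\<dots> = (\<integral>\<^sup>+D. emeasure M (?A \<inter> B D) \<partial>count_space UNIV)"
    by (simp add: eq)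
  also have "\<dots> = emeasure M ?A"
    unfolding B_def by (rule partition_emeasure[OF Asets, symmetric])
  finally have e1: "emeasure M ?A = (\<integral>\<^sup>+\<omega>. ennreal (pois Lam n (yD K (Dk S t K \<omega>))) \<partial>M)" ..
  have int: "integrable M (\<lambda>\<omega>. pois Lam n (yD K (Dk S t K \<omega>)))"
    by (rule integrable_const_bound[where B=1])
       (auto intro!: AE_I2 pois_lowp_meas simp: abs_le_iff
         intro: pois_bound[OF Dk_bounds(3)] order_trans[OF _ pois_bound(1)[OF Dk_bounds(3)]])
  have "(\<integral>\<^sup>+\<omega>. ennreal (pois Lam n (yD K (Dk S t K \<omega>))) \<partial>M) = ennreal (\<integral>\<omega>. pois Lam n (yD K (Dk S t K \<omega>)) \<partial>M)"
    by (rule nn_integral_eq_integral[OF int]) (auto intro!: AE_I2 pois_bound(1)[OF Dk_bounds(3)])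
  with e1 have "ennreal (measure M ?A) = ennreal (\<integral>\<omega>. pois Lam n (yD K (Dk S t K \<omega>)) \<partial>M)"
    by (simp add: emeasure_eq_measure)
  moreover have "0 \<le> (\<integral>\<omega>. pois Lam n (yD K (Dk S t K \<omega>)) \<partial>M)"
    by (intro integral_nonneg_AE AE_I2 pois_bound(1)[OF Dk_bounds(3)])
  ultimately show ?thesis by simp
qed

lemma mainP: "measure M {\<omega> \<in> space M. N \<omega> (\<lambda>i. S i \<omega> t) = n} = (\<integral>\<omega>. pois Lam n (\<lambda>i. S i \<omega> t) \<partial>M)"
proof -
  interpret prob_space M by (rule P)
  define A where "A = {\<omega> \<in> space M. N \<omega> (\<lambda>i. S i \<omega> t) = n}"
  define Ak where "Ak K = {\<omega> \<in> space M. N \<omega> (yD K (Dk S t K \<omega>)) = n}" for K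
  define Ek where "Ek K = {\<omega> \<in> space M. N \<omega> (yD K (Dk S t K \<omega>)) \<noteq> N \<omega> (yU K (Dk S t K \<omega>))}" for K
  define L where "L = (\<Sum>i\<in>UNIV. Lam i)"
  have As: "A \<in> sets M" using NN_set_meas[OF Y_meas Y_meas, of "\<lambda>a b. a = n"] by (simp add: A_def)
  have Aks: "Ak K \<in> sets M" for K using NN_set_meas[OF lowp_meas lowp_meas, of "\<lambda>a b. a = n"] by (simp add: Ak_def)
  have Eks: "Ek K \<in> sets M" for K unfolding Ek_def by (rule NN_set_meas[OF lowp_meas uppp_meas])
  have key1: "N \<omega> (yD K (Dk S t K \<omega>)) \<le> N \<omega> (\<lambda>i. S i \<omega> t)" if "\<omega> \<in> space M" for \<omega> K
    by (rule N_mono) (auto intro: that Dk_bounds)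
  have key2: "N \<omega> (\<lambda>i. S i \<omega> t) \<le> N \<omega> (yU K (Dk S t K \<omega>))" if "\<omega> \<in> space M" for \<omega> K
    by (rule N_mono) (auto intro: that Dk_bounds S0)
  have sub1: "A \<subseteq> Ak K \<union> Ek K" for K
    using key1[of _ K] key2[of _ K] by (force simp: A_def Ak_def Ek_def)
  have sub2: "Ak K \<subseteq> A \<union> Ek K" for K
    using key1[of _ K] key2[of _ K] by (force simp: A_def Ak_def Ek_def)
  have b1: "measure M A \<le> measure M (Ak K) + L / real (Suc K)" for K
  proof -
    have "measure M A \<le> measure M (Ak K \<union> Ek K)" by (rule finite_measure_mono[OF sub1]) (use Aks Eks in auto)
    also have "\<dots> \<le> measure M (Ak K) + measure M (Ek K)" by (rule measure_Un_le[OF Aks Eks])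
    also have "measure M (Ek K) \<le> L / real (Suc K)" unfolding Ek_def L_def by (rule Ek_bound)
    finally show ?thesis by simp
  qed
  have b2: "measure M (Ak K) \<le> measure M A + L / real (Suc K)" for K
  proof -
    have "measure M (Ak K) \<le> measure M (A \<union> Ek K)" by (rule finite_measure_mono[OF sub2]) (use As Eks in auto)
    also have "\<dots> \<le> measure M A + measure M (Ek K)" by (rule measure_Un_le[OF As Eks])
    also have "measure M (Ek K) \<le> L / real (Suc K)" unfolding Ek_def L_def by (rule Ek_bound)
    finally show ?thesis by simp
  qed
  have lim0: "(\<lambda>K. L / real (Suc K)) \<longlonglongrightarrow> 0"
    using LIMSEQ_Suc[OF lim_const_over_n[of L]] by simp
  have limA: "(\<lambda>K. measure M (Ak K)) \<longlonglongrightarrow> measure M A"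
  proof (rule tendsto_sandwich[of "\<lambda>K. measure M A - L / real (Suc K)" _ _ "\<lambda>K. measure M A + L / real (Suc K)"])
    show "\<forall>\<^sub>F K in sequentially. measure M A - L / real (Suc K) \<le> measure M (Ak K)"
      using b1 by (auto intro!: always_eventually simp: algebra_simps)
    show "\<forall>\<^sub>F K in sequentially. measure M (Ak K) \<le> measure M A + L / real (Suc K)"
      using b2 by (auto intro!: always_eventually)
    show "(\<lambda>K. measure M A - L / real (Suc K)) \<longlonglongrightarrow> measure M A"
      using tendsto_diff[OF tendsto_const lim0, of "measure M A"] by simp
    show "(\<lambda>K. measure M A + L / real (Suc K)) \<longlonglongrightarrow> measure M A"
      using tendsto_add[OF tendsto_const lim0, of "measure M A"] by simp
  qed
  have comp: "(\<lambda>K. yD K (Dk S t K \<omega>) i) \<longlonglongrightarrow> S i \<omega> t" if "\<omega> \<in> space M" for \<omega> i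
  proof (rule tendsto_sandwich[of "\<lambda>K. S i \<omega> t - 1 / real (Suc K)" _ _ "\<lambda>K. S i \<omega> t"])
    show "\<forall>\<^sub>F K in sequentially. S i \<omega> t - 1 / real (Suc K) \<le> yD K (Dk S t K \<omega>) i"
      using Dk_bounds(5)[OF that] by (auto intro!: always_eventually)
    show "\<forall>\<^sub>F K in sequentially. yD K (Dk S t K \<omega>) i \<le> S i \<omega> t"
      using Dk_bounds(1)[OF that] by (auto intro!: always_eventually)
    show "(\<lambda>K. S i \<omega> t - 1 / real (Suc K)) \<longlonglongrightarrow> S i \<omega> t"
      using tendsto_diff[OF tendsto_const LIMSEQ_Suc[OF lim_const_over_n[of 1]], of "S i \<omega> t"] by simp
  qed simp
  have limI: "(\<lambda>K. \<integral>\<omega>. pois Lam n (yD K (Dk S t K \<omega>)) \<partial>M) \<longlonglongrightarrow> (\<integral>\<omega>. pois Lam n (\<lambda>i. S i \<omega> t) \<partial>M)"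
  proof (rule integral_dominated_convergence[where w="\<lambda>_. 1"])
    show "(\<lambda>\<omega>. pois Lam n (\<lambda>i. S i \<omega> t)) \<in> borel_measurable M"
      unfolding pois_def using Sm by measurable
    show "(\<lambda>\<omega>. pois Lam n (yD K (Dk S t K \<omega>))) \<in> borel_measurable M" for K
      by (rule pois_lowp_meas)
    show "integrable M (\<lambda>_. 1::real)" by simp
    show "AE \<omega> in M. (\<lambda>K. pois Lam n (yD K (Dk S t K \<omega>))) \<longlonglongrightarrow> pois Lam n (\<lambda>i. S i \<omega> t)"
    proof (rule AE_I2)
      fix \<omega> assume \<omega>: "\<omega> \<in> space M"
      show "(\<lambda>K. pois Lam n (yD K (Dk S t K \<omega>))) \<longlonglongrightarrow> pois Lam n (\<lambda>i. S i \<omega> t)"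
        unfolding pois_def by (intro tendsto_intros comp[OF \<omega>]) auto
    qed
    show "AE \<omega> in M. norm (pois Lam n (yD K (Dk S t K \<omega>))) \<le> 1" for K
      by (rule AE_I2) (use pois_bound[OF Dk_bounds(3)] in auto)
  qed
  have "(\<lambda>K. measure M (Ak K)) = (\<lambda>K. \<integral>\<omega>. pois Lam n (yD K (Dk S t K \<omega>)) \<partial>M)"
    unfolding Ak_def by (rule ext) (rule Ak_eq)
  with limA limI have "measure M A = (\<integral>\<omega>. pois Lam n (\<lambda>i. S i \<omega> t) \<partial>M)"
    using LIMSEQ_unique by metis
  then show ?thesis by (simp add: A_def)
qed

end


lemma Qs_Gamma:
  assumes a0: "0 \<le> a" and a1: "a \<le> 1" and c0: "0 \<le> c"
  shows "Qs a c m t = (-1)^m / fact m *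
     (\<Sum>r. (- c * t)^r * Gamma (a * real r + 1) / (fact r * Gamma (a * real r + 1 - real m)))"
proof -
  define X where "X r = (- c * t)^r * Gamma (a * real r + 1) / (fact r * Gamma (a * real r + 1 - real m))" for r
  have gch: "(a * real r) gchoose m = Gamma (a * real r + 1) / (fact m * Gamma (a * real r + 1 - real m))" for r
  proof -
    have "a * real r + 1 \<notin> \<int>\<^sub>\<le>\<^sub>0"
    proof
      assume "a * real r + 1 \<in> \<int>\<^sub>\<le>\<^sub>0"
      then have "a * real r + 1 \<le> 0" by (rule nonpos_Ints_nonpos)
      moreover have "0 \<le> a * real r" using a0 by simp
      ultimately show False by simp
    qed
    from gbinomial_Gamma[OF this, of m]
    show ?thesis by (simp add: algebra_simps)
  qed
  have m1: "(-1::real)^m * (-1)^m = 1" by (simp flip: power_add)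
  have pw: "(- c * t)^r = (-c)^r * t^r" for r by (rule power_mult_distrib)
  have e: "bq a c m r * t^r = (-1)^m / fact m * X r" for r
    unfolding bq_def X_def gch pw by (simp add: mult_ac)
  have e2: "X r = ((-1)^m * fact m) * (bq a c m r * t^r)" for r
    unfolding e using m1 by (simp add: field_simps)
  have sX: "summable X"
    unfolding e2 by (intro summable_mult bq_summable a0 a1 c0)
  have "Qs a c m t = (\<Sum>r. (-1)^m / fact m * X r)" unfolding Qs_def e ..
  also have "\<dots> = (-1)^m / fact m * suminf X" by (rule suminf_mult[OF sX])
  also have Xe: "X = (\<lambda>r. (- c * t)^r * Gamma (a * real r + 1) / (fact r * Gamma (a * real r + 1 - real m)))"
    by (rule ext) (rule X_def)
  finally show ?thesis .
qed

lemma indep_S: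
  assumes P: "prob_space M"
    and Ind: "prob_space.indep_sets M
           (\<lambda>k. case k of
                None \<Rightarrow> sets (vimage_algebra (space M) N (PiM UNIV (\<lambda>_. count_space UNIV)))
              | Some i \<Rightarrow> sets (vimage_algebra (space M) (S i) (PiM UNIV (\<lambda>_. borel))))
           UNIV"
    and Sm: "\<And>i. (\<lambda>\<omega>. S i \<omega> t) \<in> borel_measurable M"
    and g: "\<And>i. (g i :: real \<Rightarrow> real) \<in> borel_measurable borel"
  shows "prob_space.indep_vars M (\<lambda>_. borel) (\<lambda>i \<omega>. g i (S i \<omega> t)) (UNIV :: 'd set)"
proof -
  interpret prob_space M by (rule P)
  have rv: "random_variable borel (\<lambda>\<omega>. g i (S i \<omega> t))" for i
    using measurable_compose[OF Sm g] by (simp add: o_def)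
  have inF: "(\<lambda>\<omega>. g i (S i \<omega> t)) -` A \<inter> space M \<in> sets (vimage_algebra (space M) (S i) (PiM UNIV (\<lambda>_. borel)))"
    if A: "A \<in> sets borel" for i A
  proof -
    have m: "(\<lambda>f. g i (f t)) \<in> measurable (PiM UNIV (\<lambda>_. borel)) borel"
      using measurable_compose[OF measurable_component_singleton[of t UNIV "\<lambda>_. borel"] g[of i]]
      by (simp add: o_def)
    have "{f. g i (f t) \<in> A} \<in> sets (PiM UNIV (\<lambda>_. borel))"
      using measurable_sets[OF m A] by (simp add: space_PiM vimage_def)
    from in_vimage_algebra[OF this, of "S i" "space M"] show ?thesis
      by (simp add: vimage_def)
  qed
  show ?thesis
    unfolding indep_vars_def2
  proof (intro conjI ballI indep_setsI)
    show "random_variable borel (\<lambda>\<omega>. g i (S i \<omega> t))" for i by (rule rv)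
    show "{(\<lambda>\<omega>. g i (S i \<omega> t)) -` A \<inter> space M |A. A \<in> sets borel} \<subseteq> events" for i
      using rv[of i] by (auto intro: measurable_sets)
  next
    fix A :: "'d \<Rightarrow> 'a set" and J :: "'d set"
    assume J: "J \<noteq> {}" "J \<subseteq> UNIV" "finite J"
      and AJ: "\<forall>j\<in>J. A j \<in> {(\<lambda>\<omega>. g j (S j \<omega> t)) -` A \<inter> space M |A. A \<in> sets borel}"
    define A' where "A' k = (case k of None \<Rightarrow> {} | Some j \<Rightarrow> A j)" for k
    have "prob (\<Inter>k\<in>Some ` J. A' k) = (\<Prod>k\<in>Some ` J. prob (A' k))"
    proof (rule indep_setsD[OF Ind])
      show "\<forall>k\<in>Some ` J. A' k \<in> (case k of
                None \<Rightarrow> sets (vimage_algebra (space M) N (PiM UNIV (\<lambda>_. count_space UNIV)))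
              | Some i \<Rightarrow> sets (vimage_algebra (space M) (S i) (PiM UNIV (\<lambda>_. borel))))"
        using AJ inF by (auto simp: A'_def)
    qed (use J in auto)
    moreover have "(\<Inter>k\<in>Some ` J. A' k) = (\<Inter>j\<in>J. A j)" by (auto simp: A'_def)
    moreover have "(\<Prod>k\<in>Some ` J. prob (A' k)) = (\<Prod>j\<in>J. prob (A j))"
      by (subst prod.reindex) (auto simp: A'_def)
    ultimately show "prob (\<Inter>j\<in>J. A j) = (\<Prod>j\<in>J. prob (A j))" by simp
  qed
qed

lemma E_sum:
  fixes Lam :: "'d::finite \<Rightarrow> real"
  assumes P: "prob_space M" and LamP: "\<And>i. 0 < Lam i"
    and Ind: "prob_space.indep_sets M
           (\<lambda>k. case k of
                None \<Rightarrow> sets (vimage_algebra (space M) N (PiM UNIV (\<lambda>_. count_space UNIV)))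
              | Some i \<Rightarrow> sets (vimage_algebra (space M) (S i) (PiM UNIV (\<lambda>_. borel))))
           UNIV"
    and Sm: "\<And>i. (\<lambda>\<omega>. S i \<omega> t) \<in> borel_measurable M"
    and S0: "\<And>i \<omega>. \<omega> \<in> space M \<Longrightarrow> 0 \<le> S i \<omega> t"
  shows "(\<integral>\<omega>. pois Lam n (\<lambda>i. S i \<omega> t) \<partial>M) =
    (\<Sum>m\<in>Theta n. \<Prod>i\<in>UNIV. \<integral>\<omega>. exp (- (Lam i * S i \<omega> t)) * (Lam i * S i \<omega> t)^(m i) / fact (m i) \<partial>M)"
proof -
  interpret prob_space M by (rule P)
  define G where "G m i \<omega> = exp (- (Lam i * S i \<omega> t)) * (Lam i * S i \<omega> t)^(m i) / fact (m i)" for m :: "'d \<Rightarrow> nat" and i \<omega>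
  have ind: "indep_vars (\<lambda>_. borel) (G m) UNIV" for m
    unfolding G_def
    by (rule indep_S[OF P Ind Sm, of "\<lambda>i y. exp (- (Lam i * y)) * (Lam i * y)^(m i) / fact (m i)", simplified])
       measurable
  have intG: "integrable M (G m i)" for m i
  proof (rule integrable_const_bound[where B=1])
    show "AE \<omega> in M. norm (G m i \<omega>) \<le> 1"
    proof (rule AE_I2)
      fix \<omega> assume "\<omega> \<in> space M"
      then have "0 \<le> Lam i * S i \<omega> t" using S0 LamP[of i] by simp
      then show "norm (G m i \<omega>) \<le> 1" using poisson_term_bound[of "Lam i * S i \<omega> t" "m i"] by (simp add: G_def)
    qed
    show "G m i \<in> borel_measurable M" unfolding G_def using Sm by measurable
  qed
  have "(\<integral>\<omega>. pois Lam n (\<lambda>i. S i \<omega> t) \<partial>M) = (\<integral>\<omega>. (\<Sum>m\<in>Theta n. \<Prod>i\<in>UNIV. G m i \<omega>) \<partial>M)"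
    unfolding pois_def G_def by (rule Bochner_Integration.integral_cong[OF refl]) (rule poisson_multinomial)
  also have "\<dots> = (\<Sum>m\<in>Theta n. \<integral>\<omega>. (\<Prod>i\<in>UNIV. G m i \<omega>) \<partial>M)"
    by (rule Bochner_Integration.integral_sum) (rule indep_vars_integrable[OF _ ind intG], simp)
  also have "\<dots> = (\<Sum>m\<in>Theta n. \<Prod>i\<in>UNIV. \<integral>\<omega>. G m i \<omega> \<partial>M)"
    by (intro sum.cong refl indep_vars_lebesgue_integral[OF _ ind intG]) simp
  finally show ?thesis by (simp add: G_def)
qed


theorem mainTheorem7:
  fixes M :: "'a measure"
    and Lam :: "'d::finite \<Rightarrow> real"
    and \<alpha> :: "'d \<Rightarrow> real"
    and N :: "'a \<Rightarrow> ('d \<Rightarrow> real) \<Rightarrow> nat"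
    and S :: "'d \<Rightarrow> 'a \<Rightarrow> real \<Rightarrow> real"
    and p :: "nat \<Rightarrow> real \<Rightarrow> real"
  assumes "prob_space M"
    and "\<And>i. 0 < Lam i"
    and "\<And>i. 0 < \<alpha> i \<and> \<alpha> i < 1"
    and "mp_poisson M Lam N"
    and "\<And>i. stable_subordinator M (\<alpha> i) (S i)"
    and "prob_space.indep_sets M
           (\<lambda>k. case k of
                None \<Rightarrow> sets (vimage_algebra (space M) N (PiM UNIV (\<lambda>_. count_space UNIV)))
              | Some i \<Rightarrow> sets (vimage_algebra (space M) (S i) (PiM UNIV (\<lambda>_. borel))))
           UNIV"
    and "\<And>n t. p n t = measure M {\<omega>\<in>space M. N \<omega> (\<lambda>i. S i \<omega> t) = n}"
  shows "(\<forall>n t. 0 \<le> t \<longrightarrow>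
            p n t = (\<Sum>m\<in>Theta n. \<Prod>i\<in>UNIV.
               (-1) ^ m i / fact (m i) *
               (\<Sum>r. (- (Lam i powr \<alpha> i) * t) ^ r * Gamma (\<alpha> i * real r + 1)
                      / (fact r * Gamma (\<alpha> i * real r + 1 - real (m i))))))
       \<and> (\<forall>n t. 0 < t \<longrightarrow>
            ((p n) has_real_derivative
               (- (\<Sum>j\<in>UNIV. Lam j powr \<alpha> j *
                   (\<Sum>r=0..n. (-1) ^ r * Gamma (\<alpha> j + 1)
                      / (fact r * Gamma (\<alpha> j + 1 - real r)) * p (n - r) t)))) (at t))
       \<and> p 0 0 = 1 \<and> (\<forall>n\<ge>1. p n 0 = 0)"
proof -
  note P = assms(1) and LamP = assms(2) and al = assms(3) and NP = assms(4) and SS = assms(5)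
    and Ind = assms(6) and pdef = assms(7)
  interpret prob_space M by (rule P)
  have Sm: "(\<lambda>\<omega>. S i \<omega> s) \<in> borel_measurable M" for i s
    using SS[of i] by (simp add: stable_subordinator_def)
  have S00: "S i \<omega> 0 = 0" if "\<omega> \<in> space M" for i \<omega>
    using SS[of i] that by (simp add: stable_subordinator_def)
  have S0: "0 \<le> S i \<omega> s" if "\<omega> \<in> space M" "0 \<le> s" for i \<omega> s
  proof -
    have "S i \<omega> 0 \<le> S i \<omega> s" using SS[of i] that unfolding stable_subordinator_def by blast
    then show ?thesis using S00[OF that(1)] by simp
  qed
  have SL: "(\<integral>\<omega>. exp (-w * S i \<omega> s) \<partial>M) = exp (- s * w powr \<alpha> i)" if "0 \<le> s" "0 < w" for i s w
    using SS[of i] that unfolding stable_subordinator_def by blast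
  define c where "c i = Lam i powr \<alpha> i" for i
  have a0: "0 \<le> \<alpha> i" and a1: "\<alpha> i \<le> 1" for i using al[of i] by auto
  have c0: "0 \<le> c i" for i by (simp add: c_def)
  define PP where "PP n s = (\<Sum>m\<in>Theta n. \<Prod>i\<in>UNIV. Qs (\<alpha> i) (c i) (m i) s)" for n s
  have pP: "p n s = PP n s" if s: "0 \<le> s" for n s
  proof -
    have S0s: "\<And>i \<omega>. \<omega> \<in> space M \<Longrightarrow> 0 \<le> S i \<omega> s" using S0 s by blast
    have "p n s = measure M {\<omega> \<in> space M. N \<omega> (\<lambda>i. S i \<omega> s) = n}" by (rule pdef)
    also have "\<dots> = (\<integral>\<omega>. pois Lam n (\<lambda>i. S i \<omega> s) \<partial>M)"
      by (rule mainP[OF P LamP NP Sm S0s Ind])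
    also have "\<dots> = (\<Sum>m\<in>Theta n. \<Prod>i\<in>UNIV. \<integral>\<omega>. exp (- (Lam i * S i \<omega> s)) * (Lam i * S i \<omega> s)^(m i) / fact (m i) \<partial>M)"
      by (rule E_sum[OF P LamP Ind Sm S0s])
    also have "\<dots> = PP n s"
      unfolding PP_def c_def
    proof (intro sum.cong prod.cong refl)
      fix m :: "'d \<Rightarrow> nat" and i :: 'd
      show "(\<integral>\<omega>. exp (- (Lam i * S i \<omega> s)) * (Lam i * S i \<omega> s)^(m i) / fact (m i) \<partial>M) =
          Qs (\<alpha> i) (Lam i powr \<alpha> i) (m i) s"
        by (rule laplace_coeff[OF P Sm S0s LamP a0 a1 SL[OF s]])
    qed
    finally show ?thesis .
  qed
  have part1: "\<forall>n t. 0 \<le> t \<longrightarrow>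
            p n t = (\<Sum>m\<in>Theta n. \<Prod>i\<in>UNIV.
               (-1) ^ m i / fact (m i) *
               (\<Sum>r. (- (Lam i powr \<alpha> i) * t) ^ r * Gamma (\<alpha> i * real r + 1)
                      / (fact r * Gamma (\<alpha> i * real r + 1 - real (m i)))))"
  proof (intro allI impI)
    fix n t assume t: "0 \<le> (t::real)"
    show "p n t = (\<Sum>m\<in>Theta n. \<Prod>i\<in>UNIV.
               (-1) ^ m i / fact (m i) *
               (\<Sum>r. (- (Lam i powr \<alpha> i) * t) ^ r * Gamma (\<alpha> i * real r + 1)
                      / (fact r * Gamma (\<alpha> i * real r + 1 - real (m i)))))"
      unfolding pP[OF t] PP_def
      unfolding c_def by (intro sum.cong prod.cong refl) (rule Qs_Gamma[OF a0 a1], simp)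
  qed
  have part2: "\<forall>n t. 0 < t \<longrightarrow>
            ((p n) has_real_derivative
               (- (\<Sum>j\<in>UNIV. Lam j powr \<alpha> j *
                   (\<Sum>r=0..n. (-1) ^ r * Gamma (\<alpha> j + 1)
                      / (fact r * Gamma (\<alpha> j + 1 - real r)) * p (n - r) t)))) (at t)"
  proof (intro allI impI)
    fix n t assume t: "0 < (t::real)"
    define Q where "Q i k = Qs (\<alpha> i) (c i) k t" for i k
    define \<beta> where "\<beta> j k = - c j * ((-1)^k * (\<alpha> j gchoose k))" for j k
    have dQ: "(Qs (\<alpha> i) (c i) k has_real_derivative (\<Sum>k'=0..k. \<beta> i k' * Q i (k - k'))) (at t)" for i k
    proof -
      have "(Qs (\<alpha> i) (c i) k has_real_derivative
          (- c i * (\<Sum>k'=0..k. (-1)^k' * (\<alpha> i gchoose k') * Qs (\<alpha> i) (c i) (k - k') t))) (at t)"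
        by (rule Qs_deriv[OF a0 a1 c0])
      also have "- c i * (\<Sum>k'=0..k. (-1)^k' * (\<alpha> i gchoose k') * Qs (\<alpha> i) (c i) (k - k') t) =
          (\<Sum>k'=0..k. \<beta> i k' * Q i (k - k'))"
        by (simp add: \<beta>_def Q_def sum_distrib_left mult_ac)
      finally show ?thesis .
    qed
    have dP: "((\<lambda>s. \<Sum>m\<in>Theta n. \<Prod>i\<in>UNIV. Qs (\<alpha> i) (c i) (m i) s) has_real_derivative
        (\<Sum>m\<in>Theta n. \<Sum>j\<in>UNIV. (\<Sum>k'=0..m j. \<beta> j k' * Q j (m j - k')) * (\<Prod>i\<in>UNIV-{j}. Q i (m i)))) (at t)"
    proof (rule DERIV_sum)
      fix m :: "'d \<Rightarrow> nat" assume "m \<in> Theta n"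
      show "((\<lambda>s. \<Prod>i\<in>UNIV. Qs (\<alpha> i) (c i) (m i) s) has_real_derivative
          (\<Sum>j\<in>UNIV. (\<Sum>k'=0..m j. \<beta> j k' * Q j (m j - k')) * (\<Prod>i\<in>UNIV-{j}. Q i (m i)))) (at t)"
        unfolding Q_def by (rule has_field_derivative_prod) (rule dQ[unfolded Q_def])
    qed
    have val: "(\<Sum>m\<in>Theta n. \<Sum>j\<in>UNIV. (\<Sum>k'=0..m j. \<beta> j k' * Q j (m j - k')) * (\<Prod>i\<in>UNIV-{j}. Q i (m i)))
        = (- (\<Sum>j\<in>UNIV. Lam j powr \<alpha> j *
                   (\<Sum>r=0..n. (-1) ^ r * Gamma (\<alpha> j + 1)
                      / (fact r * Gamma (\<alpha> j + 1 - real r)) * p (n - r) t)))"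
    proof -
      have "(\<Sum>m\<in>Theta n. \<Sum>j\<in>UNIV. (\<Sum>k'=0..m j. \<beta> j k' * Q j (m j - k')) * (\<Prod>i\<in>UNIV-{j}. Q i (m i)))
          = (\<Sum>j\<in>UNIV. \<Sum>m\<in>Theta n. (\<Sum>k'=0..m j. \<beta> j k' * Q j (m j - k')) * (\<Prod>i\<in>UNIV-{j}. Q i (m i)))"
        by (rule sum.swap)
      also have "\<dots> = (\<Sum>j\<in>UNIV. \<Sum>r=0..n. \<beta> j r * (\<Sum>m\<in>Theta (n-r). \<Prod>i\<in>UNIV. Q i (m i)))"
        by (intro sum.cong refl deriv_comb_j)
      also have "\<dots> = (\<Sum>j\<in>UNIV. \<Sum>r=0..n. \<beta> j r * p (n - r) t)"
        using pP[of t] t by (simp add: PP_def Q_def)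
      also have "\<dots> = (- (\<Sum>j\<in>UNIV. Lam j powr \<alpha> j *
                   (\<Sum>r=0..n. (-1) ^ r * Gamma (\<alpha> j + 1)
                      / (fact r * Gamma (\<alpha> j + 1 - real r)) * p (n - r) t)))"
      proof -
        have g: "(\<alpha> j gchoose r) = Gamma (\<alpha> j + 1) / (fact r * Gamma (\<alpha> j + 1 - real r))" for j r
        proof -
          have "\<alpha> j + 1 \<notin> \<int>\<^sub>\<le>\<^sub>0"
          proof
            assume "\<alpha> j + 1 \<in> \<int>\<^sub>\<le>\<^sub>0"
            then have "\<alpha> j + 1 \<le> 0" by (rule nonpos_Ints_nonpos)
            with a0[of j] show False by simp
          qed
          from gbinomial_Gamma[OF this, of r] show ?thesis by (simp add: algebra_simps)
        qed
        show ?thesis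
          by (simp add: \<beta>_def c_def g sum_distrib_left sum_negf mult_ac)
      qed
      finally show ?thesis .
    qed
    have "((\<lambda>s. \<Sum>m\<in>Theta n. \<Prod>i\<in>UNIV. Qs (\<alpha> i) (c i) (m i) s) has_real_derivative
          (- (\<Sum>j\<in>UNIV. Lam j powr \<alpha> j *
                   (\<Sum>r=0..n. (-1) ^ r * Gamma (\<alpha> j + 1)
                      / (fact r * Gamma (\<alpha> j + 1 - real r)) * p (n - r) t)))) (at t)"
      using dP unfolding val .
    then show "((p n) has_real_derivative
               (- (\<Sum>j\<in>UNIV. Lam j powr \<alpha> j *
                   (\<Sum>r=0..n. (-1) ^ r * Gamma (\<alpha> j + 1)
                      / (fact r * Gamma (\<alpha> j + 1 - real r)) * p (n - r) t)))) (at t)"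
    proof (rule has_field_derivative_transform_within_open[where S="{0<..}"])
      show "open {0::real<..}" by simp
      show "t \<in> {0<..}" using t by simp
      show "(\<Sum>m\<in>Theta n. \<Prod>i\<in>UNIV. Qs (\<alpha> i) (c i) (m i) x) = p n x" if "x \<in> {0<..}" for x
        using pP[of x n] that by (simp add: PP_def)
    qed
  qed
  have N0: "N \<omega> (\<lambda>i. S i \<omega> 0) = 0" if "\<omega> \<in> space M" for \<omega>
  proof -
    have "(\<lambda>i. S i \<omega> 0) = (\<lambda>_. 0)" using S00[OF that] by auto
    then show ?thesis using NP that by (simp add: mp_poisson_def)
  qed
  have part3: "p 0 0 = 1"
  proof -
    have "{\<omega> \<in> space M. N \<omega> (\<lambda>i. S i \<omega> 0) = 0} = space M" using N0 by auto
    then show ?thesis using pdef[of 0 0] by (simp add: prob_space)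
  qed
  have part4: "\<forall>n\<ge>1. p n 0 = 0"
  proof (intro allI impI)
    fix n :: nat assume "n \<ge> 1"
    then have e: "{\<omega> \<in> space M. N \<omega> (\<lambda>i. S i \<omega> 0) = n} = {}" using N0 by auto
    show "p n 0 = 0" unfolding pdef[of n 0] e by simp
  qed
  show ?thesis using part1 part2 part3 part4 by blast
qed


end
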